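(* Let $\mathcal P$ and $\mathrm{conv}(\mathcal P)$ be as in the context. Let $\eta$ be a real number with $0\le\eta\le\min\{L-1,(\overline C-\overline V)/V\}$ and let $\alpha,\beta,s_{\max}$ be integers such that (a) $L\le s_{\max}\le\min\{T-3,\lfloor(\overline C-\overline V)/V\rfloor\}$, (b) $0\le\alpha<\beta\le s_{\max}$, and (c) $\beta=\alpha+1$ or $s_{\max}\le L+\alpha$. Let $\mathcal S=[0,\alpha]_{\mathbb Z}\cup[\beta,s_{\max}]_{\mathbb Z}$. For any $t\in[s_{\max}+2,T-1]_{\mathbb Z}$, the inequality $$x_t\le(\overline C-\eta V)y_t+\eta Vy_{t+1}-\sum_{s\in\mathcal S}(\overline C-\overline V-sV)(y_{t-s}-y_{t-s-1})\qquad(\ast)$$ is valid for $\mathrm{conv}(\mathcal P)$. For any $t\in[2,T-s_{\max}-1]_{\mathbb Z}$, the inequality $$x_t\le(\overline C-\eta V)y_t+\eta Vy_{t-1}-\sum_{s\in\mathcal S}(\overline C-\overline V-sV)(y_{t+s}-y_{t+s+1})\qquad(\ast\ast)$$ is valid for $\mathrm{conv}(\mathcal P)$. Furthermore, $(\ast)$ and $(\ast\ast)$ are facet-defining for $\mathrm{conv}(\mathcal P)$ when $\eta\in\{0,(\overline C-\overline V)/V\}$ or $\eta=L-1\in\mathcal S$.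
   Context: For integers $a,b$, $[a,b]_{\mathbb Z}=\{a,a+1,\dots,b\}$ if $a\le b$ and $\emptyset$ otherwise. Fix a positive integer $T$, positive integers $L$ (minimum up time) and $\ell$ (minimum down time), and reals $\overline C,\underline C,V,\overline V$ with $\overline C>\underline C>0$, $V>0$, $\overline V+V\le\overline C$ and $\underline C<\overline V<\underline C+V$. $\mathcal P$ is the set of $(\mathbf x,\mathbf y)=((x_1,\dots,x_T),(y_1,\dots,y_T))\in\mathbb R_+^T\times\{0,1\}^T$ satisfying: (i) $-y_{t-1}+y_t-y_k\le 0$ for all $t\in[2,T]_{\mathbb Z}$, $k\in[t,\min\{T,t+L-1\}]_{\mathbb Z}$; (ii) $y_{t-1}-y_t+y_k\le 1$ for all $t\in[2,T]_{\mathbb Z}$, $k\in[t,\min\{T,t+\ell-1\}]_{\mathbb Z}$; (iii) $-x_t+\underline C y_t\le 0$ and $x_t-\overline C y_t\le 0$ for all $t\in[1,T]_{\mathbb Z}$; (iv) $x_t-x_{t-1}\le Vy_{t-1}+\overline V(1-y_{t-1})$ for all $t\in[2,T]_{\mathbb Z}$; (v) $x_{t-1}-x_t\le Vy_t+\overline V(1-y_t)$ for all $t\in[2,T]_{\mathbb Z}$. $\mathrm{conv}(\mathcal P)\subseteq\mathbb R^{2T}$ is its convex hull. A linear inequality is valid for $\mathrm{conv}(\mathcal P)$ if all its points satisfy it, and facet-defining if moreover the set of points of $\mathrm{conv}(\mathcal P)$ satisfying it with equality has dimension $\dim\mathrm{conv}(\mathcal P)-1$. *)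

theory Defs
  imports "HOL-Analysis.Analysis"
begin

text \<open>A point (x,y) of R^{2T} is represented as a pair of functions nat => real;
  coordinates 1..T are the meaningful ones, all others are required to be 0 so that
  the representation is canonical.\<close>
type_synonym pt = "(nat \<Rightarrow> real) \<times> (nat \<Rightarrow> real)"

definition PSet :: "nat \<Rightarrow> nat \<Rightarrow> nat \<Rightarrow> real \<Rightarrow> real \<Rightarrow> real \<Rightarrow> real \<Rightarrow> pt set" where
  "PSet T L ell Cb Cu V Vb = {(x, y).
     (\<forall>t. t \<notin> {1..T} \<longrightarrow> x t = 0 \<and> y t = 0) \<and>
     (\<forall>t\<in>{1..T}. x t \<ge> 0 \<and> (y t = 0 \<or> y t = 1)) \<and>
     (\<forall>t\<in>{2..T}. \<forall>k\<in>{t..min T (t + L - 1)}. - y (t - 1) + y t - y k \<le> 0) \<and>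
     (\<forall>t\<in>{2..T}. \<forall>k\<in>{t..min T (t + ell - 1)}. y (t - 1) - y t + y k \<le> 1) \<and>
     (\<forall>t\<in>{1..T}. - x t + Cu * y t \<le> 0 \<and> x t - Cb * y t \<le> 0) \<and>
     (\<forall>t\<in>{2..T}. x t - x (t - 1) \<le> V * y (t - 1) + Vb * (1 - y (t - 1))) \<and>
     (\<forall>t\<in>{2..T}. x (t - 1) - x t \<le> V * y t + Vb * (1 - y t))}"

definition conv_hull :: "pt set \<Rightarrow> pt set" where
  "conv_hull S = {p. \<exists>k (c :: nat \<Rightarrow> real) (q :: nat \<Rightarrow> pt).
      (\<forall>i<k. c i \<ge> 0 \<and> q i \<in> S) \<and> (\<Sum>i<k. c i) = 1 \<and>
      p = ((\<lambda>t. \<Sum>i<k. c i * fst (q i) t), (\<lambda>t. \<Sum>i<k. c i * snd (q i) t))}"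

definition aff_indep :: "nat \<Rightarrow> (nat \<Rightarrow> pt) \<Rightarrow> bool" where
  "aff_indep k q \<longleftrightarrow> (\<forall>c :: nat \<Rightarrow> real.
      (\<Sum>i\<le>k. c i) = 0 \<and>
      (\<forall>t. (\<Sum>i\<le>k. c i * fst (q i) t) = 0 \<and> (\<Sum>i\<le>k. c i * snd (q i) t) = 0)
      \<longrightarrow> (\<forall>i\<le>k. c i = 0))"

text \<open>Dimension of a (bounded-dimensional) set of points: maximum number of affinely
  independent points in it minus one; -1 for the empty set.\<close>
definition pdim :: "pt set \<Rightarrow> int" where
  "pdim S = (if S = {} then -1 else
     int (GREATEST k. \<exists>q. (\<forall>i\<le>k. q i \<in> S) \<and> aff_indep k q))"

definition valid_ineq :: "pt set \<Rightarrow> (pt \<Rightarrow> real) \<Rightarrow> (pt \<Rightarrow> real) \<Rightarrow> bool" where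
  "valid_ineq Q lhs rhs \<longleftrightarrow> (\<forall>p\<in>Q. lhs p \<le> rhs p)"

definition facet_ineq :: "pt set \<Rightarrow> (pt \<Rightarrow> real) \<Rightarrow> (pt \<Rightarrow> real) \<Rightarrow> bool" where
  "facet_ineq Q lhs rhs \<longleftrightarrow> valid_ineq Q lhs rhs \<and>
     pdim {p\<in>Q. lhs p = rhs p} = pdim Q - 1"

end

theory Submission
  imports Defs "HOL-Library.Function_Algebras"
begin

lemma vs_fun: "vector_space (\<lambda>(r::real) (f::nat\<Rightarrow>real). (\<lambda>n. r * f n))"
  by unfold_locales (auto simp: fun_eq_iff algebra_simps plus_fun_def)

lemma indep_family_bound:
  fixes w :: "nat \<Rightarrow> nat \<Rightarrow> real" and N :: "nat set"
  assumes finN: "finite N" and supp: "\<forall>i<k. \<forall>n. n \<notin> N \<longrightarrow> w i n = 0"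
  and ind: "\<forall>c. (\<forall>n. (\<Sum>i<k. c i * w i n) = 0) \<longrightarrow> (\<forall>i<k. c i = 0)"
  shows "k \<le> card N"
proof -
  interpret v: vector_space "(\<lambda>(r::real) (f::nat\<Rightarrow>real). (\<lambda>n. r * f n))" by (rule vs_fun)
  have sumf: "(\<Sum>x\<in>A. g x) n = (\<Sum>x\<in>A. g x n)" for A and g :: "'a \<Rightarrow> nat \<Rightarrow> real" and n
    by (induction A rule: infinite_finite_induct) (auto simp: plus_fun_def)
  have inj: "inj_on w {..<k}"
  proof (rule inj_onI, rule ccontr)
    fix i j assume ij: "i \<in> {..<k}" "j \<in> {..<k}" "w i = w j" "i \<noteq> j"
    define c where "c = (\<lambda>m. if m = i then 1 else if m = j then -1 else (0::real))"
    have "\<forall>n. (\<Sum>m<k. c m * w m n) = 0"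
    proof
      fix n
      have "(\<Sum>m<k. c m * w m n) = (\<Sum>m\<in>{i,j}. c m * w m n)"
        by (rule sum.mono_neutral_right) (use ij in \<open>auto simp: c_def\<close>)
      also have "\<dots> = 0" using ij by (simp add: c_def)
      finally show "(\<Sum>m<k. c m * w m n) = 0" .
    qed
    from ind[rule_format, of c i] this ij show False by (simp add: c_def)
  qed
  have indep: "v.independent (w ` {..<k})"
  proof (rule v.independent_if_scalars_zero)
    show "finite (w ` {..<k})" by simp
    fix f x assume h: "(\<Sum>x\<in>w ` {..<k}. (\<lambda>n. f x * x n)) = 0" and x: "x \<in> w ` {..<k}"
    have "\<forall>n. (\<Sum>i<k. f (w i) * w i n) = 0"
    proof
      fix n
      have "(\<Sum>i<k. f (w i) * w i n) = (\<Sum>x\<in>w ` {..<k}. (\<lambda>n. f x * x n)) n"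
        by (simp add: sumf sum.reindex[OF inj])
      then show "(\<Sum>i<k. f (w i) * w i n) = 0" using h by simp
    qed
    with ind x show "f x = 0" by auto
  qed
  define \<delta> where "\<delta> = (\<lambda>m (n::nat). if n = m then (1::real) else 0)"
  have sp: "w ` {..<k} \<subseteq> v.span (\<delta> ` N)"
  proof
    fix x assume "x \<in> w ` {..<k}"
    then obtain i where i: "i < k" "x = w i" by auto
    have "x = (\<Sum>m\<in>N. (\<lambda>n. w i m * \<delta> m n))"
    proof
      fix n
      show "x n = (\<Sum>m\<in>N. (\<lambda>n. w i m * \<delta> m n)) n"
        using supp i finN by (cases "n \<in> N") (auto simp: sumf \<delta>_def if_distrib cong: if_cong)
    qed
    also have "\<dots> \<in> v.span (\<delta> ` N)"
      by (intro v.span_sum v.span_scale v.span_base) auto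
    finally show "x \<in> v.span (\<delta> ` N)" .
  qed
  have "card (w ` {..<k}) \<le> card (\<delta> ` N)"
    using v.independent_span_bound[OF _ indep sp] finN by auto
  also have "\<dots> \<le> card N" by (rule card_image_le[OF finN])
  finally show ?thesis using card_image[OF inj] by simp
qed

lemma ramp_run:
  fixes x y :: "nat \<Rightarrow> real"
  assumes xub: "\<And>i. x i \<le> Cb * y i" and xlb: "\<And>i. 0 \<le> x i"
  and rup: "\<And>i. 2 \<le> i \<Longrightarrow> i \<le> T \<Longrightarrow> x i - x (i-1) \<le> V * y (i-1) + Vb * (1 - y (i-1))"
  and j: "2 \<le> j" "y (j-1) = 0"
  shows "j + n \<le> T \<Longrightarrow> (\<forall>k. j \<le> k \<and> k \<le> j + n \<longrightarrow> y k = 1) \<Longrightarrow> x (j+n) \<le> Vb + real n * V"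
proof (induction n)
  case 0
  have "x (j-1) \<le> 0" using xub[of "j-1"] j by simp
  moreover have "x j - x (j-1) \<le> Vb" using rup[of j] j 0 by simp
  ultimately show ?case by simp
next
  case (Suc n)
  have IH: "x (j+n) \<le> Vb + real n * V" using Suc by auto
  have "y (j + n) = 1" using Suc.prems by auto
  moreover have "x (j + Suc n) - x (j+n) \<le> V * y (j+n) + Vb * (1 - y (j+n))"
    using rup[of "j + Suc n"] j Suc.prems by simp
  ultimately show ?case using IH by (simp add: algebra_simps)
qed

lemma valid_core:
  fixes x y :: "nat \<Rightarrow> real"
  assumes yb: "\<And>i. y i = 0 \<or> y i = 1"
  and minup: "\<And>j k. 2 \<le> j \<Longrightarrow> j \<le> k \<Longrightarrow> k \<le> T \<Longrightarrow> k \<le> j + L - 1 \<Longrightarrow> y (j-1) = 0 \<Longrightarrow> y j = 1 \<Longrightarrow> y k = 1"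
  and xub: "\<And>i. x i \<le> Cb * y i" and xlb: "\<And>i. 0 \<le> x i"
  and rup: "\<And>i. 2 \<le> i \<Longrightarrow> i \<le> T \<Longrightarrow> x i - x (i-1) \<le> V * y (i-1) + Vb * (1 - y (i-1))"
  and rdn: "\<And>i. 2 \<le> i \<Longrightarrow> i \<le> T \<Longrightarrow> x (i-1) - x i \<le> V * y i + Vb * (1 - y i)"
  and V: "V > 0" and Cb0: "0 \<le> Cb" and cs: "Cb - Vb - real smax * V \<ge> 0"
  and eta: "0 \<le> eta" "eta \<le> real L - 1" "eta * V \<le> Cb - Vb"
  and ab: "alpha < beta" "beta \<le> smax" "beta = alpha + 1 \<or> smax \<le> L + alpha"
  and t: "smax + 2 \<le> t" "t + 1 \<le> T"
  shows "x t \<le> (Cb - eta*V) * y t + eta*V*y(t+1)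
     - (\<Sum>s\<in>{0..alpha} \<union> {beta..smax}. (Cb - Vb - real s * V) * (y (t-s) - y (t-s-1)))"
proof -
  define S where "S = {0..alpha} \<union> {beta..smax}"
  define c where "c s = Cb - Vb - real s * V" for s
  define d where "d s = y (t-s) - y (t-s-1)" for s
  define P where "P m = (\<Sum>s\<in>{s\<in>S. m \<le> s}. c s * d s)" for m
  have Ssub: "S \<subseteq> {0..smax}" using ab by (auto simp: S_def)
  have finS: "finite S" by (simp add: S_def)
  have cmono: "c s' \<le> c s" if "s \<le> s'" for s s' using that V by (simp add: c_def mult_right_mono)
  have cnn: "0 \<le> c s" if "s \<le> smax" for s using cmono[OF that] cs by (simp add: c_def)
  define Inv where "Inv m \<longleftrightarrow> (P m \<le> 0 \<or> (y (t-m) = 1 \<and> (\<exists>\<sigma>\<in>S. m \<le> \<sigma> \<and> P m \<le> c \<sigma> \<and> y (t-\<sigma>-1) = 0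
        \<and> (\<forall>k. t-\<sigma> \<le> k \<and> k \<le> t-m \<longrightarrow> y k = 1))))" for m
  have Pstep: "P m = P (m+1) + (if m \<in> S then c m * d m else 0)" for m
  proof -
    have "{s\<in>S. m \<le> s} = (if m \<in> S then insert m {s\<in>S. m+1 \<le> s} else {s\<in>S. m+1 \<le> s})"
      by (auto simp: le_eq_less_or_eq Suc_le_eq)
    then show ?thesis using finS by (simp add: P_def)
  qed
  have step: "Inv m" if m: "m \<le> smax" and IH: "Inv (m+1)" for m
  proof -
    have tm: "t - (m+1) = t - m - 1" by simp
    consider (A) "P (m+1) \<le> 0" | (B) \<sigma> where "y (t-m-1) = 1" "\<sigma> \<in> S" "m + 1 \<le> \<sigma>" "P (m+1) \<le> c \<sigma>"
      "y (t-\<sigma>-1) = 0" "\<forall>k. t - \<sigma> \<le> k \<and> k \<le> t - m - 1 \<longrightarrow> y k = 1"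
      using IH unfolding Inv_def tm by blast
    note IHc = this
    consider "y (t-m) = 1" "y (t-m-1) = 1" | "y (t-m) = 1" "y (t-m-1) = 0"
      | "y (t-m) = 0" "y (t-m-1) = 0" | "y (t-m) = 0" "y (t-m-1) = 1"
      using yb[of "t-m"] yb[of "t-m-1"] by blast
    then show ?thesis
    proof cases
      case 1
      then have Pm: "P m = P (m+1)" by (simp add: Pstep[of m] d_def)
      from IHc show ?thesis
      proof cases
        case A then show ?thesis using Pm by (simp add: Inv_def)
      next
        case (B \<sigma>)
        have "\<forall>k. t - \<sigma> \<le> k \<and> k \<le> t - m \<longrightarrow> y k = 1"
        proof (intro allI impI)
          fix k assume k: "t - \<sigma> \<le> k \<and> k \<le> t - m"
          show "y k = 1"
          proof (cases "k = t - m")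
            case True then show ?thesis using 1 by simp
          next
            case False then have "k \<le> t - m - 1" using k by linarith
            then show ?thesis using k B(6) by simp
          qed
        qed
        then show ?thesis unfolding Inv_def using B Pm 1 by (intro disjI2) (auto intro!: bexI[of _ \<sigma>])
      qed
    next
      case 2
      have P1: "P (m+1) \<le> 0" using IHc 2 by cases auto
      show ?thesis
      proof (cases "m \<in> S")
        case True
        then have "P m \<le> c m" using P1 2 by (simp add: Pstep[of m] d_def)
        then show ?thesis unfolding Inv_def using True 2 by (intro disjI2) (auto intro!: bexI[of _ m])
      next
        case False
        then show ?thesis using P1 by (simp add: Inv_def Pstep[of m])
      qed
    next
      case 3
      have P1: "P (m+1) \<le> 0" using IHc 3 by cases auto
      then show ?thesis using 3 by (simp add: Inv_def Pstep[of m] d_def)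
    next
      case 4
      have dm: "d m = -1" using 4 by (simp add: d_def)
      from IHc show ?thesis
      proof cases
        case A
        then show ?thesis using cnn[OF m] dm by (simp add: Inv_def Pstep[of m])
      next
        case (B \<sigma>)
        have \<sigma>s: "\<sigma> \<le> smax" using B(2) Ssub by auto
        have j2: "2 \<le> t - \<sigma>" using \<sigma>s t by simp
        have yj: "y (t-\<sigma>) = 1" using B(6) B(3) t \<sigma>s by auto
        have big: "m + L \<le> \<sigma>"
        proof (rule ccontr)
          assume "\<not> m + L \<le> \<sigma>"
          then have "t - m \<le> t - \<sigma> + L - 1" using \<sigma>s t by simp
          then have "y (t-m) = 1"
            using minup[of "t-\<sigma>" "t-m"] j2 B(3,5) yj t by simp
          with 4 show False by simp
        qed
        show ?thesis
        proof (cases "m \<in> S")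
          case True
          then have "P m = P (m+1) - c m" using dm by (simp add: Pstep[of m])
          moreover have "c \<sigma> \<le> c m" using B(3) by (intro cmono) simp
          ultimately show ?thesis using B(4) by (simp add: Inv_def)
        next
          case False
          have "alpha < m" "m < beta" using False m by (auto simp: S_def)
          then have "smax \<le> L + alpha" using ab(3) by auto
          then have False using big \<sigma>s \<open>alpha < m\<close> by simp
          then show ?thesis ..
        qed
      qed
    qed
  qed
  have invall: "Inv (smax + 1 - n)" if "n \<le> smax + 1" for n
    using that
  proof (induction n)
    case 0
    have e: "{s\<in>S. smax + 1 \<le> s} = {}" using Ssub by auto
    have "P (smax + 1) = 0" unfolding P_def e by simp
    then show ?case by (simp add: Inv_def)
  next
    case (Suc n)
    then have "Inv (smax + 1 - n)" by simp
    moreover have "smax + 1 - n = (smax + 1 - Suc n) + 1" using Suc.prems by simp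
    ultimately show ?case using step[of "smax + 1 - Suc n"] Suc.prems by simp
  qed
  have I0: "Inv 0" using invall[of "smax+1"] by simp
  have P0: "P 0 = (\<Sum>s\<in>{0..alpha} \<union> {beta..smax}. (Cb - Vb - real s * V) * (y (t-s) - y (t-s-1)))"
  proof -
    have "{s\<in>S. 0 \<le> s} = S" by simp
    then show ?thesis unfolding P_def by (simp add: S_def c_def d_def)
  qed
  have xrdn: "x t \<le> Vb" if "y (t+1) = 0"
  proof -
    have "x (t+1) \<le> 0" using xub[of "t+1"] that by simp
    moreover have "x t - x (t+1) \<le> Vb" using rdn[of "t+1"] that t by simp
    ultimately show ?thesis by simp
  qed
  have xC: "x t \<le> Cb" using xub[of t] yb[of t] Cb0 by auto
  have main: "x t \<le> (Cb - eta*V) * y t + eta*V*y(t+1) - P 0"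
  proof (cases "y t = 0")
    case True
    then have "x t = 0" using xub[of t] xlb[of t] by simp
    moreover have "P 0 \<le> 0" using I0 True by (auto simp: Inv_def)
    moreover have "0 \<le> eta * V * y (t+1)" using eta V yb[of "t+1"] by auto
    ultimately show ?thesis using True by simp
  next
    case False
    then have yt: "y t = 1" using yb by metis
    from I0 show ?thesis unfolding Inv_def
    proof (elim disjE conjE bexE)
      assume P: "P 0 \<le> 0"
      show ?thesis
      proof (cases "y (t+1) = 0")
        case True
        then show ?thesis using xrdn P yt eta by simp
      next
        case False
        then have "y (t+1) = 1" using yb by metis
        then show ?thesis using xC P yt by (simp add: algebra_simps)
      qed
    next
      fix \<sigma> assume \<sigma>: "\<sigma> \<in> S" "0 \<le> \<sigma>" "P 0 \<le> c \<sigma>" "y (t-\<sigma>-1) = 0"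
          "\<forall>k. t - \<sigma> \<le> k \<and> k \<le> t - 0 \<longrightarrow> y k = 1"
      have \<sigma>s: "\<sigma> \<le> smax" using \<sigma>(1) Ssub by auto
      have j2: "2 \<le> t - \<sigma>" using \<sigma>s t by simp
      have "x (t - \<sigma> + \<sigma>) \<le> Vb + real \<sigma> * V"
        by (rule ramp_run[where x=x and y=y and Cb=Cb and T=T and V=V and Vb=Vb and j="t-\<sigma>" and n=\<sigma>, OF xub xlb rup j2]) (use \<sigma> t \<sigma>s in auto)
      then have xs: "x t \<le> Vb + real \<sigma> * V" using \<sigma>s t by simp
      show ?thesis
      proof (cases "y (t+1) = 0")
        case True
        have yj: "y (t-\<sigma>) = 1" using \<sigma>(5) \<sigma>s t by auto
        have "real L - 1 \<le> real \<sigma>"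
        proof (rule ccontr)
          assume "\<not> real L - 1 \<le> real \<sigma>"
          then have "t + 1 \<le> t - \<sigma> + L - 1" using \<sigma>s t by linarith
          then have "y (t+1) = 1"
            using minup[of "t-\<sigma>" "t+1"] j2 \<sigma>(4) yj t by simp
          with True show False by simp
        qed
        then have "eta * V \<le> real \<sigma> * V" using eta V by (intro mult_right_mono) auto
        then show ?thesis using xrdn[OF True] \<sigma>(3) yt True by (simp add: c_def algebra_simps)
      next
        case False
        then have "y (t+1) = 1" using yb by metis
        then show ?thesis using xs \<sigma>(3) yt by (simp add: c_def algebra_simps)
      qed
    qed
  qed
  then show ?thesis using P0 by simp
qed

lemma PSet_iff: "(x, y) \<in> PSet T L ell Cb Cu V Vb \<longleftrightarrow>
     (\<forall>t. t \<notin> {1..T} \<longrightarrow> x t = 0 \<and> y t = 0) \<and>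
     (\<forall>t\<in>{1..T}. x t \<ge> 0 \<and> (y t = 0 \<or> y t = 1)) \<and>
     (\<forall>t\<in>{2..T}. \<forall>k\<in>{t..min T (t + L - 1)}. - y (t - 1) + y t - y k \<le> 0) \<and>
     (\<forall>t\<in>{2..T}. \<forall>k\<in>{t..min T (t + ell - 1)}. y (t - 1) - y t + y k \<le> 1) \<and>
     (\<forall>t\<in>{1..T}. - x t + Cu * y t \<le> 0 \<and> x t - Cb * y t \<le> 0) \<and>
     (\<forall>t\<in>{2..T}. x t - x (t - 1) \<le> V * y (t - 1) + Vb * (1 - y (t - 1))) \<and>
     (\<forall>t\<in>{2..T}. x (t - 1) - x t \<le> V * y t + Vb * (1 - y t))"
  by (simp add: PSet_def)

lemma switch:
  fixes f :: "nat \<Rightarrow> real"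
  assumes "i < k" "f i \<noteq> f k" "\<And>j. i \<le> j \<Longrightarrow> j \<le> k \<Longrightarrow> f j = 0 \<or> f j = 1"
  shows "\<exists>j. i < j \<and> j \<le> k \<and> f (j-1) = f i \<and> f j = f k"
  using assms
proof (induction k)
  case 0 then show ?case by simp
next
  case (Suc k)
  show ?case
  proof (cases "f k = f i")
    case True
    then show ?thesis using Suc.prems by (intro exI[of _ "Suc k"]) auto
  next
    case False
    then have "i < k" using Suc.prems by (metis less_antisym)
    moreover have "f i \<noteq> f k" using False by auto
    ultimately have "\<exists>j>i. j \<le> k \<and> f (j - 1) = f i \<and> f j = f k" using Suc.IH Suc.prems by auto
    then obtain j where j: "i < j" "j \<le> k" "f (j-1) = f i" "f j = f k" by auto
    have "f k = f (Suc k)" using Suc.prems(3)[of k] Suc.prems(3)[of "Suc k"] Suc.prems(3)[of i] Suc.prems(2) False \<open>i < k\<close> by auto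
    then show ?thesis using j by (intro exI[of _ j]) auto
  qed
qed

definition rev_pt :: "nat \<Rightarrow> pt \<Rightarrow> pt" where
  "rev_pt T p = ((\<lambda>\<tau>. if \<tau> \<in> {1..T} then fst p (T+1-\<tau>) else 0), (\<lambda>\<tau>. if \<tau> \<in> {1..T} then snd p (T+1-\<tau>) else 0))"

lemma rev_in_P:
  assumes "p \<in> PSet T L ell Cb Cu V Vb"
  shows "rev_pt T p \<in> PSet T L ell Cb Cu V Vb"
proof -
  obtain x y where p: "p = (x, y)" by (cases p)
  note P = assms[unfolded p PSet_iff]
  note P1 = P[THEN conjunct1]
  note P2 = P[THEN conjunct2, THEN conjunct1]
  note P3 = P[THEN conjunct2, THEN conjunct2, THEN conjunct1]
  note P4 = P[THEN conjunct2, THEN conjunct2, THEN conjunct2, THEN conjunct1]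
  note P5 = P[THEN conjunct2, THEN conjunct2, THEN conjunct2, THEN conjunct2, THEN conjunct1]
  note P6 = P[THEN conjunct2, THEN conjunct2, THEN conjunct2, THEN conjunct2, THEN conjunct2, THEN conjunct1]
  note P7 = P[THEN conjunct2, THEN conjunct2, THEN conjunct2, THEN conjunct2, THEN conjunct2, THEN conjunct2]
  have yb: "y j = 0 \<or> y j = 1" for j
  proof (cases "j \<in> {1..T}")
    case True then show ?thesis using P2 by blast
  next
    case False then show ?thesis using P1 by blast
  qed
  have minup: "y k = 1" if "2 \<le> j" "j \<le> k" "k \<le> T" "k \<le> j + L - 1" "y (j-1) = 0" "y j = 1" for j k
  proof -
    have "j \<in> {2..T}" "k \<in> {j..min T (j + L - 1)}" using that(1-4) by auto
    then have "- y (j - 1) + y j - y k \<le> 0" using P3 by blast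
    then show ?thesis using that yb[of k] by auto
  qed
  have mindn: "y k = 0" if "2 \<le> j" "j \<le> k" "k \<le> T" "k \<le> j + ell - 1" "y (j-1) = 1" "y j = 0" for j k
  proof -
    have "j \<in> {2..T}" "k \<in> {j..min T (j + ell - 1)}" using that(1-4) by auto
    then have "y (j - 1) - y j + y k \<le> 1" using P4 by blast
    then show ?thesis using that yb[of k] by auto
  qed
  define x' where "x' = (\<lambda>\<tau>. if \<tau> \<in> {1..T} then x (T+1-\<tau>) else 0)"
  define y' where "y' = (\<lambda>\<tau>. if \<tau> \<in> {1..T} then y (T+1-\<tau>) else 0)"
  have r: "rev_pt T p = (x', y')" unfolding rev_pt_def p x'_def y'_def fst_conv snd_conv ..
  have c1: "\<forall>t. t \<notin> {1..T} \<longrightarrow> x' t = 0 \<and> y' t = 0" by (simp add: x'_def y'_def)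
  have c2: "\<forall>t\<in>{1..T}. x' t \<ge> 0 \<and> (y' t = 0 \<or> y' t = 1)"
  proof
    fix t assume t: "t \<in> {1..T}"
    then have "T+1-t \<in> {1..T}" by auto
    then have "x (T+1-t) \<ge> 0" using P2 by blast
    then show "x' t \<ge> 0 \<and> (y' t = 0 \<or> y' t = 1)" using yb t by (simp add: x'_def y'_def)
  qed
  have c3: "\<forall>t\<in>{2..T}. \<forall>k\<in>{t..min T (t + L - 1)}. - y' (t - 1) + y' t - y' k \<le> 0"
  proof (intro ballI)
    fix t k assume t: "t \<in> {2..T}" and k: "k \<in> {t..min T (t + L - 1)}"
    define a where "a = T + 2 - t"
    define b where "b = T + 1 - k"
    have e: "y' (t-1) = y a" "y' t = y (a - 1)" "y' k = y b" using t k by (auto simp: y'_def a_def b_def)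
    have ab: "2 \<le> a" "a \<le> T" "1 \<le> b" "b < a" "a \<le> b + L" using t k by (auto simp: a_def b_def)
    show "- y' (t - 1) + y' t - y' k \<le> 0"
    proof (rule ccontr)
      assume "\<not> ?thesis"
      then have yy: "y a = 0" "y (a-1) = 1" "y b = 0" unfolding e using yb[of a] yb[of "a-1"] yb[of b] by auto
      have "b \<noteq> a - 1" using yy by auto
      then have "b < a - 1" using ab by arith
      then obtain j where j: "b < j" "j \<le> a - 1" "y (j-1) = 0" "y j = 1"
        using switch[of b "a-1" y] yy ab yb by auto
      have "y a = 1" by (rule minup[of j a]) (use j ab in auto)
      with yy show False by simp
    qed
  qed
  have c4: "\<forall>t\<in>{2..T}. \<forall>k\<in>{t..min T (t + ell - 1)}. y' (t - 1) - y' t + y' k \<le> 1"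
  proof (intro ballI)
    fix t k assume t: "t \<in> {2..T}" and k: "k \<in> {t..min T (t + ell - 1)}"
    define a where "a = T + 2 - t"
    define b where "b = T + 1 - k"
    have e: "y' (t-1) = y a" "y' t = y (a - 1)" "y' k = y b" using t k by (auto simp: y'_def a_def b_def)
    have ab: "2 \<le> a" "a \<le> T" "1 \<le> b" "b < a" "a \<le> b + ell" using t k by (auto simp: a_def b_def)
    show "y' (t - 1) - y' t + y' k \<le> 1"
    proof (rule ccontr)
      assume "\<not> ?thesis"
      then have yy: "y a = 1" "y (a-1) = 0" "y b = 1" unfolding e using yb[of a] yb[of "a-1"] yb[of b] by auto
      have "b \<noteq> a - 1" using yy by auto
      then have "b < a - 1" using ab by arith
      then obtain j where j: "b < j" "j \<le> a - 1" "y (j-1) = 1" "y j = 0"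
        using switch[of b "a-1" y] yy ab yb by auto
      have "y a = 0" by (rule mindn[of j a]) (use j ab in auto)
      with yy show False by simp
    qed
  qed
  have c5: "\<forall>t\<in>{1..T}. - x' t + Cu * y' t \<le> 0 \<and> x' t - Cb * y' t \<le> 0"
  proof
    fix t assume t: "t \<in> {1..T}"
    then have "T+1-t \<in> {1..T}" by auto
    then have "- x (T+1-t) + Cu * y (T+1-t) \<le> 0 \<and> x (T+1-t) - Cb * y (T+1-t) \<le> 0" using P5 by blast
    then show "- x' t + Cu * y' t \<le> 0 \<and> x' t - Cb * y' t \<le> 0" using t by (simp add: x'_def y'_def)
  qed
  have c6: "\<forall>t\<in>{2..T}. x' t - x' (t - 1) \<le> V * y' (t - 1) + Vb * (1 - y' (t - 1))"
  proof
    fix t assume t: "t \<in> {2..T}"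
    have "x (T+2-t-1) - x (T+2-t) \<le> V * y (T+2-t) + Vb * (1 - y (T+2-t))"
    proof -
      have "T+2-t \<in> {2..T}" using t by auto
      then show ?thesis using P7 by blast
    qed
    moreover have "T+2-t-1 = T+1-t" "T+1-(t-1) = T+2-t" using t by auto
    ultimately show "x' t - x' (t - 1) \<le> V * y' (t - 1) + Vb * (1 - y' (t - 1))"
      using t by (auto simp: x'_def y'_def)
  qed
  have c7: "\<forall>t\<in>{2..T}. x' (t - 1) - x' t \<le> V * y' t + Vb * (1 - y' t)"
  proof
    fix t assume t: "t \<in> {2..T}"
    have "x (T+2-t) - x (T+2-t-1) \<le> V * y (T+2-t-1) + Vb * (1 - y (T+2-t-1))"
    proof -
      have "T+2-t \<in> {2..T}" using t by auto
      then show ?thesis using P6 by blast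
    qed
    moreover have "T+2-t-1 = T+1-t" "T+1-(t-1) = T+2-t" using t by auto
    ultimately show "x' (t - 1) - x' t \<le> V * y' t + Vb * (1 - y' t)"
      using t by (auto simp: x'_def y'_def)
  qed
  show ?thesis unfolding r PSet_iff using c1 c2 c3 c4 c5 c6 c7 by blast
qed

definition Glin :: "real \<Rightarrow> real \<Rightarrow> nat \<Rightarrow> nat \<Rightarrow> nat set \<Rightarrow> (nat \<Rightarrow> real) \<Rightarrow> (nat \<Rightarrow> nat) \<Rightarrow> (nat \<Rightarrow> nat) \<Rightarrow> (nat \<Rightarrow> real) \<Rightarrow> real" where
  "Glin A B i1 i2 S \<gamma> f g y = A * y i1 + B * y i2 - (\<Sum>s\<in>S. \<gamma> s * (y (f s) - y (g s)))"

lemma Glin_sum: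
  "Glin A B i1 i2 S \<gamma> f g (\<lambda>\<tau>. \<Sum>i<k. c i * ys i \<tau>) = (\<Sum>i<k. c i * Glin A B i1 i2 S \<gamma> f g (ys i))"
proof -
  have "(\<Sum>s\<in>S. \<gamma> s * ((\<Sum>i<k. c i * ys i (f s)) - (\<Sum>i<k. c i * ys i (g s))))
      = (\<Sum>s\<in>S. \<Sum>i<k. c i * (\<gamma> s * (ys i (f s) - ys i (g s))))"
  proof (rule sum.cong[OF refl])
    fix s
    have "(\<Sum>i<k. c i * ys i (f s)) - (\<Sum>i<k. c i * ys i (g s)) = (\<Sum>i<k. c i * ys i (f s) - c i * ys i (g s))"
      by (rule sum_subtractf[symmetric])
    then show "\<gamma> s * ((\<Sum>i<k. c i * ys i (f s)) - (\<Sum>i<k. c i * ys i (g s))) = (\<Sum>i<k. c i * (\<gamma> s * (ys i (f s) - ys i (g s))))"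
      by (simp add: sum_distrib_left right_diff_distrib mult.left_commute)
  qed
  also have "\<dots> = (\<Sum>i<k. \<Sum>s\<in>S. c i * (\<gamma> s * (ys i (f s) - ys i (g s))))" by (rule sum.swap)
  also have "\<dots> = (\<Sum>i<k. c i * (\<Sum>s\<in>S. \<gamma> s * (ys i (f s) - ys i (g s))))" by (simp add: sum_distrib_left)
  finally have e: "(\<Sum>s\<in>S. \<gamma> s * ((\<Sum>i<k. c i * ys i (f s)) - (\<Sum>i<k. c i * ys i (g s))))
      = (\<Sum>i<k. c i * (\<Sum>s\<in>S. \<gamma> s * (ys i (f s) - ys i (g s))))" .
  have "(\<Sum>i<k. c i * Glin A B i1 i2 S \<gamma> f g (ys i)) = (\<Sum>i<k. A * (c i * ys i i1) + B * (c i * ys i i2) - c i * (\<Sum>s\<in>S. \<gamma> s * (ys i (f s) - ys i (g s))))"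
    by (rule sum.cong[OF refl]) (simp add: Glin_def algebra_simps)
  also have "\<dots> = A * (\<Sum>i<k. c i * ys i i1) + B * (\<Sum>i<k. c i * ys i i2) - (\<Sum>i<k. c i * (\<Sum>s\<in>S. \<gamma> s * (ys i (f s) - ys i (g s))))"
    by (simp add: sum_subtractf sum.distrib sum_distrib_left)
  finally show ?thesis using e by (simp add: Glin_def)
qed

lemma conv_valid:
  assumes "\<forall>q\<in>S. fst q t \<le> Glin A B i1 i2 J \<gamma> f g (snd q)" and "p \<in> conv_hull S"
  shows "fst p t \<le> Glin A B i1 i2 J \<gamma> f g (snd p)"
proof -
  from assms(2) obtain k :: nat and c q where kcq0: "(\<forall>i<k. c i \<ge> 0 \<and> q i \<in> S) \<and> (\<Sum>i<k. c i) = 1 \<and>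
    p = ((\<lambda>t. \<Sum>i<k. c i * fst (q i) t), (\<lambda>t. \<Sum>i<k. c i * snd (q i) t))"
    unfolding conv_hull_def mem_Collect_eq by (elim exE) (erule that)
  note kcq = kcq0[THEN conjunct1] kcq0[THEN conjunct2, THEN conjunct1] kcq0[THEN conjunct2, THEN conjunct2]
  have "fst p t = (\<Sum>i<k. c i * fst (q i) t)" using kcq by simp
  also have "\<dots> \<le> (\<Sum>i<k. c i * Glin A B i1 i2 J \<gamma> f g (snd (q i)))"
    using kcq assms(1) by (intro sum_mono mult_left_mono) auto
  also have "\<dots> = Glin A B i1 i2 J \<gamma> f g (snd p)"
    using kcq by (simp add: Glin_sum)
  finally show ?thesis .
qed

lemma in_conv: "p \<in> S \<Longrightarrow> p \<in> conv_hull S"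
  unfolding conv_hull_def mem_Collect_eq
  by (intro exI[of _ "1::nat"] exI[of _ "\<lambda>_. 1::real"] exI[of _ "\<lambda>_::nat. p"]) simp

locale setting =
  fixes T L ell :: nat and Cb Cu V Vb eta :: real and alpha beta smax :: nat
  assumes T0: "T > 0" and L0: "L > 0" and ell0: "ell > 0"
    and CbCu: "Cb > Cu" and Cu0: "Cu > 0" and V0: "V > 0" and VbV: "Vb + V \<le> Cb"
    and CuVb: "Cu < Vb" and VbCu: "Vb < Cu + V"
    and eta0: "0 \<le> eta" and etam: "eta \<le> min (real L - 1) ((Cb - Vb) / V)"
    and Ls: "L \<le> smax" and sT: "int smax \<le> int T - 3" and sq: "int smax \<le> \<lfloor>(Cb - Vb) / V\<rfloor>"
    and ab: "alpha < beta" and bs: "beta \<le> smax"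
    and gap: "beta = alpha + 1 \<or> smax \<le> L + alpha"
begin

abbreviation "P \<equiv> PSet T L ell Cb Cu V Vb"
abbreviation "S \<equiv> {0..alpha} \<union> {beta..smax}"

definition G1 :: "nat \<Rightarrow> (nat \<Rightarrow> real) \<Rightarrow> real" where
  "G1 t = Glin (Cb - eta * V) (eta * V) t (t+1) S (\<lambda>s. Cb - Vb - real s * V) (\<lambda>s. t - s) (\<lambda>s. t - s - 1)"
definition G2 :: "nat \<Rightarrow> (nat \<Rightarrow> real) \<Rightarrow> real" where
  "G2 t = Glin (Cb - eta * V) (eta * V) t (t-1) S (\<lambda>s. Cb - Vb - real s * V) (\<lambda>s. t + s) (\<lambda>s. t + s + 1)"

lemma smaxq: "real smax * V \<le> Cb - Vb"
proof -
  have "real smax \<le> (Cb - Vb) / V" using sq by linarith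
  then show ?thesis using V0 by (simp add: pos_le_divide_eq)
qed

lemma etaV: "eta * V \<le> Cb - Vb" "eta \<le> real L - 1"
proof -
  have "eta \<le> (Cb - Vb) / V" using etam by simp
  then show "eta * V \<le> Cb - Vb" using V0 by (simp add: pos_le_divide_eq)
  show "eta \<le> real L - 1" using etam by simp
qed

lemma valid1_P:
  assumes p: "p \<in> P" and t: "smax + 2 \<le> t" "t \<le> T - 1"
  shows "fst p t \<le> G1 t (snd p)"
proof -
  obtain x y where pxy: "p = (x, y)" by (cases p)
  note PP = p[unfolded pxy PSet_iff]
  note P1 = PP[THEN conjunct1]
  note P2 = PP[THEN conjunct2, THEN conjunct1]
  note P3 = PP[THEN conjunct2, THEN conjunct2, THEN conjunct1]
  note P5 = PP[THEN conjunct2, THEN conjunct2, THEN conjunct2, THEN conjunct2, THEN conjunct1]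
  note P6 = PP[THEN conjunct2, THEN conjunct2, THEN conjunct2, THEN conjunct2, THEN conjunct2, THEN conjunct1]
  note P7 = PP[THEN conjunct2, THEN conjunct2, THEN conjunct2, THEN conjunct2, THEN conjunct2, THEN conjunct2]
  have yb: "y j = 0 \<or> y j = 1" for j
  proof (cases "j \<in> {1..T}")
    case True then show ?thesis using P2 by blast
  next
    case False then show ?thesis using P1 by blast
  qed
  have minup: "y k = 1" if "2 \<le> j" "j \<le> k" "k \<le> T" "k \<le> j + L - 1" "y (j-1) = 0" "y j = 1" for j k
  proof -
    have "j \<in> {2..T}" "k \<in> {j..min T (j + L - 1)}" using that(1-4) by auto
    then have "- y (j - 1) + y j - y k \<le> 0" using P3 by blast
    then show ?thesis using that yb[of k] by auto
  qed
  have xub: "x i \<le> Cb * y i" for i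
  proof (cases "i \<in> {1..T}")
    case True then show ?thesis using P5 by auto
  next
    case False then show ?thesis using P1 by auto
  qed
  have xlb: "0 \<le> x i" for i
  proof (cases "i \<in> {1..T}")
    case True then show ?thesis using P2 by auto
  next
    case False then show ?thesis using P1 by auto
  qed
  have rup: "x i - x (i-1) \<le> V * y (i-1) + Vb * (1 - y (i-1))" if "2 \<le> i" "i \<le> T" for i
    using P6 that by auto
  have rdn: "x (i-1) - x i \<le> V * y i + Vb * (1 - y i)" if "2 \<le> i" "i \<le> T" for i
    using P7 that by auto
  have Cb0: "0 \<le> Cb" using CbCu Cu0 by simp
  have cs: "Cb - Vb - real smax * V \<ge> 0" using smaxq by simp
  have t1: "t + 1 \<le> T" using t sT by linarith
  have "x t \<le> (Cb - eta*V) * y t + eta*V*y(t+1)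
     - (\<Sum>s\<in>{0..alpha} \<union> {beta..smax}. (Cb - Vb - real s * V) * (y (t-s) - y (t-s-1)))"
    by (rule valid_core[where x=x and y=y and T=T and L=L and Cb=Cb and V=V and Vb=Vb and eta=eta and alpha=alpha and beta=beta and smax=smax and t=t, OF yb minup xub xlb rup rdn V0 Cb0 cs eta0 etaV(2) etaV(1) ab bs gap t(1) t1])
  then show ?thesis by (simp add: pxy G1_def Glin_def)
qed


lemma rev_fst: "\<tau> \<in> {1..T} \<Longrightarrow> fst (rev_pt T p) \<tau> = fst p (T + 1 - \<tau>)"
  and rev_snd: "\<tau> \<in> {1..T} \<Longrightarrow> snd (rev_pt T p) \<tau> = snd p (T + 1 - \<tau>)"
  by (simp_all add: rev_pt_def)

lemma G1_rev:
  assumes t: "2 \<le> t" "t + smax + 1 \<le> T"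
  shows "G1 (T + 1 - t) (snd (rev_pt T p)) = G2 t (snd p)"
proof -
  let ?y = "snd p" and ?y' = "snd (rev_pt T p)"
  have a: "?y' (T + 1 - t) = ?y t"
  proof -
    have "T + 1 - t \<in> {1..T}" "T + 1 - (T + 1 - t) = t" using t by auto
    then show ?thesis by (simp add: rev_snd)
  qed
  have b: "?y' (T + 1 - t + 1) = ?y (t - 1)"
  proof -
    have "T + 1 - t + 1 \<in> {1..T}" using t by auto
    moreover have "T + 1 - (T + 1 - t + 1) = t - 1" using t by auto
    ultimately show ?thesis by (simp add: rev_snd)
  qed
  have c: "(\<Sum>s\<in>S. (Cb - Vb - real s * V) * (?y' (T + 1 - t - s) - ?y' (T + 1 - t - s - 1)))
     = (\<Sum>s\<in>S. (Cb - Vb - real s * V) * (?y (t + s) - ?y (t + s + 1)))"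
  proof (rule sum.cong[OF refl])
    fix s assume "s \<in> S"
    then have s: "s \<le> smax" using ab bs by auto
    have "T + 1 - t - s \<in> {1..T}" "T + 1 - t - s - 1 \<in> {1..T}" using s t by auto
    moreover have "T + 1 - (T + 1 - t - s) = t + s" "T + 1 - (T + 1 - t - s - 1) = t + s + 1" using s t by auto
    ultimately show "(Cb - Vb - real s * V) * (?y' (T + 1 - t - s) - ?y' (T + 1 - t - s - 1))
       = (Cb - Vb - real s * V) * (?y (t + s) - ?y (t + s + 1))" by (simp add: rev_snd)
  qed
  show ?thesis unfolding G1_def G2_def Glin_def using a b c by simp
qed

lemma valid2_P:
  assumes p: "p \<in> P" and t: "2 \<le> t" "int t \<le> int T - int smax - 1"
  shows "fst p t \<le> G2 t (snd p)"
proof -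
  have t': "smax + 2 \<le> T + 1 - t" "T + 1 - t \<le> T - 1" "t + smax + 1 \<le> T" using t by linarith+
  have "fst (rev_pt T p) (T + 1 - t) \<le> G1 (T + 1 - t) (snd (rev_pt T p))"
    by (rule valid1_P[OF rev_in_P[OF p] t'(1,2)])
  moreover have "fst (rev_pt T p) (T + 1 - t) = fst p t"
  proof -
    have "T + 1 - t \<in> {1..T}" "T + 1 - (T + 1 - t) = t" using t' t by auto
    then show ?thesis by (simp add: rev_fst)
  qed
  ultimately show ?thesis using G1_rev[OF t(1) t'(3)] by simp
qed

lemma valid1_Q:
  assumes "p \<in> conv_hull P" "smax + 2 \<le> t" "t \<le> T - 1"
  shows "fst p t \<le> G1 t (snd p)"
  using conv_valid[OF _ assms(1), of t] valid1_P[OF _ assms(2,3)] unfolding G1_def by blast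

lemma valid2_Q:
  assumes "p \<in> conv_hull P" "2 \<le> t" "int t \<le> int T - int smax - 1"
  shows "fst p t \<le> G2 t (snd p)"
  using conv_valid[OF _ assms(1), of t] valid2_P[OF _ assms(2,3)] unfolding G2_def by blast

end

lemma sum_shift_atMost: "(\<Sum>j\<le>k. f j) = f 0 + (\<Sum>i<k. f (Suc i))"
  unfolding lessThan_Suc_atMost[symmetric] by (rule sum.lessThan_Suc_shift)

lemma aff_to_lin:
  assumes ai: "aff_indep k q"
    and h1: "\<forall>\<tau>. (\<Sum>i<k. c i * (fst (q (Suc i)) \<tau> - fst (q 0) \<tau>)) = 0"
    and h2: "\<forall>\<tau>. (\<Sum>i<k. c i * (snd (q (Suc i)) \<tau> - snd (q 0) \<tau>)) = 0"
  shows "\<forall>i<k. c i = 0"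
proof -
  define c' where "c' j = (if j = 0 then - (\<Sum>i<k. c i) else c (j - 1))" for j
  have s: "(\<Sum>j\<le>k. c' j) = 0" by (simp add: sum_shift_atMost c'_def)
  have f: "(\<Sum>j\<le>k. c' j * fst (q j) \<tau>) = 0" for \<tau>
  proof -
    have "(\<Sum>j\<le>k. c' j * fst (q j) \<tau>) = (\<Sum>i<k. c i * (fst (q (Suc i)) \<tau> - fst (q 0) \<tau>))"
      by (simp add: sum_shift_atMost c'_def sum_distrib_right right_diff_distrib sum_subtractf)
    then show ?thesis using h1 by simp
  qed
  have g: "(\<Sum>j\<le>k. c' j * snd (q j) \<tau>) = 0" for \<tau>
  proof -
    have "(\<Sum>j\<le>k. c' j * snd (q j) \<tau>) = (\<Sum>i<k. c i * (snd (q (Suc i)) \<tau> - snd (q 0) \<tau>))"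
      by (simp add: sum_shift_atMost c'_def sum_distrib_right right_diff_distrib sum_subtractf)
    then show ?thesis using h2 by simp
  qed
  have z: "\<forall>j\<le>k. c' j = 0" using ai s f g unfolding aff_indep_def by blast
  show ?thesis
  proof (intro allI impI)
    fix i assume "i < k"
    then have "Suc i \<le> k" by simp
    with z have "c' (Suc i) = 0" by blast
    then show "c i = 0" by (simp add: c'_def)
  qed
qed

definition enc :: "pt \<Rightarrow> nat \<Rightarrow> real" where
  "enc p n = (if even n then fst p (n div 2) else snd p (n div 2))"

lemma aff_bound:
  assumes ai: "aff_indep k q"
    and supp: "\<forall>i\<le>k. \<forall>\<tau>. \<tau> \<notin> {1..T} \<longrightarrow> fst (q i) \<tau> = 0 \<and> snd (q i) \<tau> = 0"
  shows "k \<le> 2 * T"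
proof -
  define w where "w i n = enc (q (Suc i)) n - enc (q 0) n" for i n
  have "k \<le> card {2..2*T+1}"
  proof (rule indep_family_bound[of "{2..2*T+1}" k w])
    show "finite {2..2*T+1}" by simp
    show "\<forall>i<k. \<forall>n. n \<notin> {2..2 * T + 1} \<longrightarrow> w i n = 0"
    proof (intro allI impI)
      fix i n assume i: "i < k" and n: "n \<notin> {2..2 * T + 1}"
      then have "n div 2 \<notin> {1..T}" by auto
      then show "w i n = 0" using supp i by (simp add: w_def enc_def)
    qed
    show "\<forall>c. (\<forall>n. (\<Sum>i<k. c i * w i n) = 0) \<longrightarrow> (\<forall>i<k. c i = 0)"
    proof (rule allI, rule impI)
      fix c assume h: "\<forall>n. (\<Sum>i<k. c i * w i n) = 0"
      show "\<forall>i<k. c i = 0"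
      proof (rule aff_to_lin[OF ai])
        show "\<forall>\<tau>. (\<Sum>i<k. c i * (fst (q (Suc i)) \<tau> - fst (q 0) \<tau>)) = 0"
        proof
          fix \<tau> have "(\<Sum>i<k. c i * w i (2 * \<tau>)) = 0" using h by blast
          then show "(\<Sum>i<k. c i * (fst (q (Suc i)) \<tau> - fst (q 0) \<tau>)) = 0" by (simp add: w_def enc_def)
        qed
        show "\<forall>\<tau>. (\<Sum>i<k. c i * (snd (q (Suc i)) \<tau> - snd (q 0) \<tau>)) = 0"
        proof
          fix \<tau> have "(\<Sum>i<k. c i * w i (2 * \<tau> + 1)) = 0" using h by blast
          then show "(\<Sum>i<k. c i * (snd (q (Suc i)) \<tau> - snd (q 0) \<tau>)) = 0" by (simp add: w_def enc_def)
        qed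
      qed
    qed
  qed
  then show ?thesis by simp
qed

lemma Glin_diff: "Glin A B i1 i2 J \<gamma> f g (\<lambda>\<tau>. a \<tau> - b \<tau>) = Glin A B i1 i2 J \<gamma> f g a - Glin A B i1 i2 J \<gamma> f g b"
proof -
  have e: "(\<Sum>s\<in>J. \<gamma> s * (a (f s) - b (f s) - (a (g s) - b (g s)))) =
        (\<Sum>s\<in>J. \<gamma> s * (a (f s) - a (g s))) - (\<Sum>s\<in>J. \<gamma> s * (b (f s) - b (g s)))"
    unfolding sum_subtractf[symmetric] by (rule sum.cong) (auto simp: algebra_simps)
  show ?thesis unfolding Glin_def e by (simp add: right_diff_distrib)
qed

lemma Glin_zero: "Glin A B i1 i2 J \<gamma> f g (\<lambda>\<tau>. 0) = 0"
  by (simp add: Glin_def)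

lemma aff_bound_face:
  assumes ai: "aff_indep k q"
    and supp: "\<forall>i\<le>k. \<forall>\<tau>. \<tau> \<notin> {1..T} \<longrightarrow> fst (q i) \<tau> = 0 \<and> snd (q i) \<tau> = 0"
    and t0: "t0 \<in> {1..T}"
    and face: "\<forall>i\<le>k. fst (q i) t0 = Glin A B i1 i2 J \<gamma> f g (snd (q i))"
  shows "k \<le> 2 * T - 1"
proof -
  define w where "w i n = (if n = 2 * t0 then 0 else enc (q (Suc i)) n - enc (q 0) n)" for i n
  have "k \<le> card ({2..2*T+1} - {2 * t0})"
  proof (rule indep_family_bound[of _ k w])
    show "finite ({2..2*T+1} - {2 * t0})" by simp
    show "\<forall>i<k. \<forall>n. n \<notin> {2..2 * T + 1} - {2 * t0} \<longrightarrow> w i n = 0"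
    proof (intro allI impI)
      fix i n assume i: "i < k" and n: "n \<notin> {2..2 * T + 1} - {2 * t0}"
      show "w i n = 0"
      proof (cases "n = 2 * t0")
        case True then show ?thesis by (simp add: w_def)
      next
        case False
        then have "n div 2 \<notin> {1..T}" using n by auto
        then show ?thesis using supp i False by (simp add: w_def enc_def)
      qed
    qed
    show "\<forall>c. (\<forall>n. (\<Sum>i<k. c i * w i n) = 0) \<longrightarrow> (\<forall>i<k. c i = 0)"
    proof (rule allI, rule impI)
      fix c assume h: "\<forall>n. (\<Sum>i<k. c i * w i n) = 0"
      have h2: "\<forall>\<tau>. (\<Sum>i<k. c i * (snd (q (Suc i)) \<tau> - snd (q 0) \<tau>)) = 0"
      proof
        fix \<tau> have "(\<Sum>i<k. c i * w i (2 * \<tau> + 1)) = 0" using h by blast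
        moreover have "2 * \<tau> + 1 \<noteq> 2 * t0" by presburger
        ultimately show "(\<Sum>i<k. c i * (snd (q (Suc i)) \<tau> - snd (q 0) \<tau>)) = 0" by (simp add: w_def enc_def)
      qed
      have h1': "(\<Sum>i<k. c i * (fst (q (Suc i)) \<tau> - fst (q 0) \<tau>)) = 0" if "\<tau> \<noteq> t0" for \<tau>
      proof -
        have "(\<Sum>i<k. c i * w i (2 * \<tau>)) = 0" using h by blast
        then show ?thesis using that by (simp add: w_def enc_def)
      qed
      have "(\<Sum>i<k. c i * (fst (q (Suc i)) t0 - fst (q 0) t0))
          = (\<Sum>i<k. c i * Glin A B i1 i2 J \<gamma> f g (\<lambda>\<tau>. snd (q (Suc i)) \<tau> - snd (q 0) \<tau>))"
        using face by (intro sum.cong refl) (simp add: Glin_diff)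
      also have "\<dots> = Glin A B i1 i2 J \<gamma> f g (\<lambda>\<tau>. \<Sum>i<k. c i * (snd (q (Suc i)) \<tau> - snd (q 0) \<tau>))"
        by (rule Glin_sum[symmetric])
      also have "\<dots> = 0" using h2 by (simp add: Glin_zero)
      finally have "(\<Sum>i<k. c i * (fst (q (Suc i)) t0 - fst (q 0) t0)) = 0" .
      with h1' have h1: "\<forall>\<tau>. (\<Sum>i<k. c i * (fst (q (Suc i)) \<tau> - fst (q 0) \<tau>)) = 0" by metis
      show "\<forall>i<k. c i = 0" by (rule aff_to_lin[OF ai h1 h2])
    qed
  qed
  moreover have "card ({2..2*T+1} - {2 * t0}) = 2 * T - 1" using t0 by (simp add: card_Diff_singleton)
  ultimately show ?thesis by simp
qed

definition ONp :: "nat \<Rightarrow> real \<Rightarrow> pt" where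
  "ONp T Cb = ((\<lambda>\<tau>. if \<tau> \<in> {1..T} then Cb else 0), (\<lambda>\<tau>. if \<tau> \<in> {1..T} then 1 else 0))"
definition OFFp :: pt where "OFFp = ((\<lambda>_. 0), (\<lambda>_. 0))"
definition PERT :: "nat \<Rightarrow> real \<Rightarrow> real \<Rightarrow> nat \<Rightarrow> pt" where
  "PERT T Cb V j = ((\<lambda>\<tau>. if \<tau> \<in> {1..T} then (if \<tau> = j then Cb - V else Cb) else 0), (\<lambda>\<tau>. if \<tau> \<in> {1..T} then 1 else 0))"

lemma split_idx:
  fixes T k :: nat
  assumes "1 \<le> T" "T \<le> k"
  shows "(\<Sum>i\<le>k. h i) = h 0 + h 1 + (\<Sum>a\<in>{2..T}. h a) + (\<Sum>i\<in>{T+1..k}. h i)"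
proof -
  have e: "{..k} = {0, 1} \<union> ({2..T} \<union> {T+1..k})" using assms by auto
  have "(\<Sum>i\<le>k. h i) = (\<Sum>i\<in>{0,1}. h i) + (\<Sum>i\<in>{2..T} \<union> {T+1..k}. h i)"
    unfolding e by (rule sum.union_disjoint) (use assms in auto)
  also have "(\<Sum>i\<in>{2..T} \<union> {T+1..k}. h i) = (\<Sum>a\<in>{2..T}. h a) + (\<Sum>i\<in>{T+1..k}. h i)"
    by (rule sum.union_disjoint) auto
  finally show ?thesis by (simp add: add.assoc)
qed

lemma sum_single:
  assumes "finite A" "a \<in> A" "\<forall>b\<in>A. b \<noteq> a \<longrightarrow> f b = 0"
  shows "(\<Sum>b\<in>A. f b) = f a"
proof -
  have "(\<Sum>b\<in>A. f b) = f a + (\<Sum>b\<in>A - {a}. f b)" using assms by (simp add: sum.remove)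
  also have "(\<Sum>b\<in>A - {a}. f b) = 0" using assms by (intro sum.neutral) auto
  finally show ?thesis by simp
qed

lemma fam_indep:
  assumes T2: "2 \<le> T" and kT: "T \<le> k" and V: "V \<noteq> 0"
    and q0: "q 0 = ONp T Cb" and q1: "q 1 = OFFp"
    and qp: "\<forall>i\<in>{T+1..k}. q i = PERT T Cb V (pj i)"
    and pjinj: "inj_on pj {T+1..k}" and pjr: "pj ` {T+1..k} \<subseteq> {1..T}"
    and Dd: "\<forall>a\<in>{2..T}. snd (q a) a - snd (q a) (a - 1) \<noteq> 0"
    and Do: "\<forall>a\<in>{2..T}. a \<noteq> astar \<longrightarrow> (\<forall>m\<in>{2..T}. m \<noteq> a \<longrightarrow> snd (q a) m - snd (q a) (m - 1) = 0)"
  shows "aff_indep k q"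
  unfolding aff_indep_def
proof (rule allI, rule impI)
  fix c :: "nat \<Rightarrow> real"
  assume h: "(\<Sum>i\<le>k. c i) = 0 \<and> (\<forall>t. (\<Sum>i\<le>k. c i * fst (q i) t) = 0 \<and> (\<Sum>i\<le>k. c i * snd (q i) t) = 0)"
  define D where "D a m = snd (q a) m - snd (q a) (m - 1)" for a m
  have T1: "1 \<le> T" using T2 by simp
  note sp = split_idx[OF T1 kT]
  have s1: "(\<Sum>a\<in>{2..T}. c a * D a m) = 0" if m: "m \<in> {2..T}" for m
  proof -
    have "(\<Sum>i\<le>k. c i * snd (q i) m) - (\<Sum>i\<le>k. c i * snd (q i) (m - 1)) = 0" using h by simp
    then have "(\<Sum>i\<le>k. c i * (snd (q i) m - snd (q i) (m - 1))) = 0"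
      by (simp add: sum_subtractf[symmetric] right_diff_distrib)
    moreover have "(\<Sum>i\<le>k. c i * (snd (q i) m - snd (q i) (m - 1))) = (\<Sum>a\<in>{2..T}. c a * D a m)"
    proof -
      have "m - 1 \<in> {1..T}" "m \<in> {1..T}" using m by auto
      then have A: "(\<Sum>i\<in>{T+1..k}. c i * (snd (q i) m - snd (q i) (m - 1))) = 0"
        using qp by (intro sum.neutral) (auto simp: PERT_def)
      have B: "c 0 * (snd (q 0) m - snd (q 0) (m - 1)) = 0" using m q0 by (auto simp: ONp_def)
      have C: "c 1 * (snd (q 1) m - snd (q 1) (m - 1)) = 0" using q1 by (simp add: OFFp_def)
      show ?thesis unfolding sp A B C D_def by simp
    qed
    ultimately show ?thesis by simp
  qed
  have cstar: "c astar = 0" if "astar \<in> {2..T}"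
  proof -
    have "(\<Sum>a\<in>{2..T}. c a * D a astar) = c astar * D astar astar"
      using that Do by (intro sum_single) (auto simp: D_def)
    then show ?thesis using s1[OF that] Dd that by (simp add: D_def)
  qed
  have ca: "c a = 0" if a: "a \<in> {2..T}" for a
  proof (cases "a = astar")
    case True then show ?thesis using cstar a by simp
  next
    case False
    have "(\<Sum>a'\<in>{2..T}. c a' * D a' a) = c a * D a a"
    proof (rule sum_single)
      show "\<forall>b\<in>{2..T}. b \<noteq> a \<longrightarrow> c b * D b a = 0"
      proof (intro ballI impI)
        fix b assume b: "b \<in> {2..T}" "b \<noteq> a"
        show "c b * D b a = 0"
        proof (cases "b = astar")
          case True then show ?thesis using cstar b by simp
        next
          case False then show ?thesis using Do b a by (simp add: D_def)
        qed
      qed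
    qed (use a in auto)
    then show ?thesis using s1[OF a] Dd a by (simp add: D_def)
  qed
  have sa0: "(\<Sum>a\<in>{2..T}. c a * g a) = 0" for g using ca by simp
  have y1: "c 0 + (\<Sum>i\<in>{T+1..k}. c i) = 0"
  proof -
    have "(\<Sum>i\<le>k. c i * snd (q i) 1) = 0" using h by simp
    moreover have "(\<Sum>i\<in>{T+1..k}. c i * snd (q i) 1) = (\<Sum>i\<in>{T+1..k}. c i)"
      using qp T1 by (intro sum.cong) (auto simp: PERT_def)
    ultimately show ?thesis unfolding sp using q0 q1 T1 sa0 by (simp add: ONp_def OFFp_def)
  qed
  have c1: "c 1 = 0"
  proof -
    have "(\<Sum>i\<le>k. c i) = 0" using h by simp
    then show ?thesis unfolding sp using sa0[of "\<lambda>_. 1"] y1 by simp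
  qed
  have cp: "c i0 = 0" if i0: "i0 \<in> {T+1..k}" for i0
  proof -
    define j where "j = pj i0"
    have j: "j \<in> {1..T}" using pjr i0 unfolding j_def by blast
    have "(\<Sum>i\<le>k. c i * fst (q i) j) = 0" using h by simp
    moreover have "(\<Sum>i\<in>{T+1..k}. c i * fst (q i) j) = (\<Sum>i\<in>{T+1..k}. c i * Cb) - c i0 * V"
    proof -
      have "(\<Sum>i\<in>{T+1..k}. c i * fst (q i) j) = (\<Sum>i\<in>{T+1..k}. c i * Cb - (if i = i0 then c i * V else 0))"
      proof (rule sum.cong[OF refl])
        fix i assume i: "i \<in> {T+1..k}"
        have "pj i = j \<longleftrightarrow> i = i0" using pjinj i i0 unfolding j_def inj_on_def by blast
        then show "c i * fst (q i) j = c i * Cb - (if i = i0 then c i * V else 0)"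
          using qp i j by (auto simp: PERT_def algebra_simps)
      qed
      also have "\<dots> = (\<Sum>i\<in>{T+1..k}. c i * Cb) - c i0 * V"
        using i0 by (simp add: sum_subtractf)
      finally show ?thesis .
    qed
    ultimately have "c 0 * Cb + (\<Sum>i\<in>{T+1..k}. c i * Cb) - c i0 * V = 0"
      unfolding sp using q0 q1 j sa0 by (simp add: ONp_def OFFp_def)
    moreover have "c 0 * Cb + (\<Sum>i\<in>{T+1..k}. c i * Cb) = 0"
      using y1 by (simp add: sum_distrib_right[symmetric] distrib_right[symmetric])
    ultimately show ?thesis using V by simp
  qed
  have c0: "c 0 = 0" using y1 cp by simp
  show "\<forall>i\<le>k. c i = 0"
  proof (intro allI impI)
    fix i assume "i \<le> k"
    then consider "i = 0" | "i = 1" | "i \<in> {2..T}" | "i \<in> {T+1..k}" by fastforce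
    then show "c i = 0" using c0 c1 ca cp by cases auto
  qed
qed

definition IV :: "nat \<Rightarrow> nat \<Rightarrow> nat \<Rightarrow> real \<Rightarrow> pt" where
  "IV T a b X = ((\<lambda>\<tau>. if a \<le> \<tau> \<and> \<tau> \<le> b \<and> \<tau> \<in> {1..T} then X else 0),
                 (\<lambda>\<tau>. if a \<le> \<tau> \<and> \<tau> \<le> b \<and> \<tau> \<in> {1..T} then 1 else 0))"

definition RAMP :: "nat \<Rightarrow> nat \<Rightarrow> nat \<Rightarrow> real \<Rightarrow> real \<Rightarrow> pt" where
  "RAMP T a m Vb V = ((\<lambda>\<tau>. if a \<le> \<tau> \<and> \<tau> \<le> T then Vb + real (min \<tau> m - a) * V else 0),
                      (\<lambda>\<tau>. if a \<le> \<tau> \<and> \<tau> \<le> T then 1 else 0))"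

lemma IV_in_P:
  assumes a: "1 \<le> a" "a \<le> b" "b \<le> T" and X: "Cu \<le> X" "X \<le> Cb" "0 \<le> Cu"
    and Xa: "a = 1 \<or> X \<le> Vb" and Xb: "b = T \<or> X \<le> Vb"
    and up: "a = 1 \<or> b = T \<or> a + L \<le> b + 1" and V: "0 \<le> V" "0 \<le> Vb"
  shows "IV T a b X \<in> PSet T L ell Cb Cu V Vb"
proof -
  define y where "y \<tau> = (if a \<le> \<tau> \<and> \<tau> \<le> b \<and> \<tau> \<in> {1..T} then 1 else (0::real))" for \<tau>
  define x where "x \<tau> = (if a \<le> \<tau> \<and> \<tau> \<le> b \<and> \<tau> \<in> {1..T} then X else (0::real))" for \<tau>
  have iv: "IV T a b X = (x, y)" by (simp add: IV_def fun_eq_iff x_def y_def)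
  have y1: "y \<tau> = 1 \<longleftrightarrow> a \<le> \<tau> \<and> \<tau> \<le> b" for \<tau> using a by (auto simp: y_def)
  have y0: "y \<tau> = 0 \<longleftrightarrow> \<not> (a \<le> \<tau> \<and> \<tau> \<le> b)" for \<tau> using a by (auto simp: y_def)
  have xy: "x \<tau> = X * y \<tau>" for \<tau> by (simp add: x_def y_def)
  have yb: "y \<tau> = 0 \<or> y \<tau> = 1" for \<tau> by (simp add: y_def)
  have c1: "\<forall>t. t \<notin> {1..T} \<longrightarrow> x t = 0 \<and> y t = 0" by (simp add: x_def y_def)
  have c2: "\<forall>t\<in>{1..T}. x t \<ge> 0 \<and> (y t = 0 \<or> y t = 1)" using X by (simp add: x_def y_def)
  have c3: "\<forall>t\<in>{2..T}. \<forall>k\<in>{t..min T (t + L - 1)}. - y (t - 1) + y t - y k \<le> 0"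
  proof (intro ballI)
    fix t k assume t: "t \<in> {2..T}" and k: "k \<in> {t..min T (t + L - 1)}"
    show "- y (t - 1) + y t - y k \<le> 0"
    proof (rule ccontr)
      assume "\<not> ?thesis"
      then have "y (t-1) = 0" "y t = 1" "y k = 0" using yb[of "t-1"] yb[of t] yb[of k] by auto
      then have "\<not> (a \<le> t - 1 \<and> t - 1 \<le> b)" "a \<le> t" "t \<le> b" "\<not> (a \<le> k \<and> k \<le> b)" using y1 y0 by blast+
      then have "t = a" "b < k" using k t by auto
      then show False using up t k by auto
    qed
  qed
  have c4: "\<forall>t\<in>{2..T}. \<forall>k\<in>{t..min T (t + ell - 1)}. y (t - 1) - y t + y k \<le> 1"
  proof (intro ballI)
    fix t k assume t: "t \<in> {2..T}" and k: "k \<in> {t..min T (t + ell - 1)}"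
    show "y (t - 1) - y t + y k \<le> 1"
    proof (rule ccontr)
      assume "\<not> ?thesis"
      then have "y (t-1) = 1" "y t = 0" "y k = 1" using yb[of "t-1"] yb[of t] yb[of k] by auto
      then have "a \<le> t - 1 \<and> t - 1 \<le> b" "\<not> (a \<le> t \<and> t \<le> b)" "a \<le> k \<and> k \<le> b" using y1 y0 by blast+
      then show False using k by auto
    qed
  qed
  have c5: "\<forall>t\<in>{1..T}. - x t + Cu * y t \<le> 0 \<and> x t - Cb * y t \<le> 0"
    using X by (auto simp: x_def y_def)
  have c6: "\<forall>t\<in>{2..T}. x t - x (t - 1) \<le> V * y (t - 1) + Vb * (1 - y (t - 1))"
  proof
    fix t assume t: "t \<in> {2..T}"
    consider "y (t-1) = 1" | "y (t-1) = 0" using yb by blast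
    then show "x t - x (t - 1) \<le> V * y (t - 1) + Vb * (1 - y (t - 1))"
    proof cases
      case 1
      then show ?thesis using yb[of t] X V by (auto simp: xy)
    next
      case 2
      show ?thesis
      proof (cases "y t = 1")
        case True
        then have h1: "a \<le> t \<and> t \<le> b" using y1 by blast
        have h2: "\<not> (a \<le> t - 1 \<and> t - 1 \<le> b)" using 2 y0 by blast
        have "t = a" "a \<noteq> 1" using h1 h2 t by auto
        then have "X \<le> Vb" using Xa by simp
        then show ?thesis using 2 True by (simp add: xy)
      next
        case False
        then have "y t = 0" using yb by blast
        then show ?thesis using 2 V by (simp add: xy)
      qed
    qed
  qed
  have c7: "\<forall>t\<in>{2..T}. x (t - 1) - x t \<le> V * y t + Vb * (1 - y t)"
  proof
    fix t assume t: "t \<in> {2..T}"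
    consider "y t = 1" | "y t = 0" using yb by blast
    then show "x (t - 1) - x t \<le> V * y t + Vb * (1 - y t)"
    proof cases
      case 1
      then show ?thesis using yb[of "t-1"] X V by (auto simp: xy)
    next
      case 2
      show ?thesis
      proof (cases "y (t-1) = 1")
        case True
        then have h1: "a \<le> t - 1 \<and> t - 1 \<le> b" using y1 by blast
        have h2: "\<not> (a \<le> t \<and> t \<le> b)" using 2 y0 by blast
        have "t - 1 = b" "b \<noteq> T" using h1 h2 t a by auto
        then have "X \<le> Vb" using Xb by simp
        then show ?thesis using 2 True by (simp add: xy)
      next
        case False
        then have "y (t-1) = 0" using yb by blast
        then show ?thesis using 2 V by (simp add: xy)
      qed
    qed
  qed
  show ?thesis unfolding iv PSet_iff using c1 c2 c3 c4 c5 c6 c7 by blast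
qed

lemma RAMP_in_P:
  assumes a: "2 \<le> a" "a \<le> m" "m \<le> T" and top: "Vb + real (m - a) * V \<le> Cb"
    and Cu: "0 \<le> Cu" "Cu \<le> Vb" and V: "0 \<le> V"
  shows "RAMP T a m Vb V \<in> PSet T L ell Cb Cu V Vb"
proof -
  define y where "y \<tau> = (if a \<le> \<tau> \<and> \<tau> \<le> T then 1 else (0::real))" for \<tau>
  define x where "x \<tau> = (if a \<le> \<tau> \<and> \<tau> \<le> T then Vb + real (min \<tau> m - a) * V else (0::real))" for \<tau>
  have r: "RAMP T a m Vb V = (x, y)" by (simp add: RAMP_def fun_eq_iff x_def y_def)
  have yb: "y \<tau> = 0 \<or> y \<tau> = 1" for \<tau> by (simp add: y_def)
  have xlo: "Vb \<le> x \<tau>" if "a \<le> \<tau>" "\<tau> \<le> T" for \<tau> using that V by (simp add: x_def)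
  have xhi: "x \<tau> \<le> Cb" if "a \<le> \<tau>" "\<tau> \<le> T" for \<tau>
  proof -
    have "real (min \<tau> m - a) * V \<le> real (m - a) * V" using V by (intro mult_right_mono) auto
    then show ?thesis using that top by (simp add: x_def)
  qed
  have c1: "\<forall>t. t \<notin> {1..T} \<longrightarrow> x t = 0 \<and> y t = 0" using a by (auto simp: x_def y_def)
  have c2: "\<forall>t\<in>{1..T}. x t \<ge> 0 \<and> (y t = 0 \<or> y t = 1)"
    using xlo Cu yb by (auto simp: x_def)
  have c3: "\<forall>t\<in>{2..T}. \<forall>k\<in>{t..min T (t + L - 1)}. - y (t - 1) + y t - y k \<le> 0"
    by (auto simp: y_def)
  have c4: "\<forall>t\<in>{2..T}. \<forall>k\<in>{t..min T (t + ell - 1)}. y (t - 1) - y t + y k \<le> 1"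
    by (auto simp: y_def)
  have c5: "\<forall>t\<in>{1..T}. - x t + Cu * y t \<le> 0 \<and> x t - Cb * y t \<le> 0"
  proof
    fix t assume t: "t \<in> {1..T}"
    show "- x t + Cu * y t \<le> 0 \<and> x t - Cb * y t \<le> 0"
    proof (cases "a \<le> t")
      case True then show ?thesis using xlo[of t] xhi[of t] t Cu by (simp add: y_def)
    next
      case False then show ?thesis by (simp add: x_def y_def)
    qed
  qed
  have c6: "\<forall>t\<in>{2..T}. x t - x (t - 1) \<le> V * y (t - 1) + Vb * (1 - y (t - 1))"
  proof
    fix t assume t: "t \<in> {2..T}"
    show "x t - x (t - 1) \<le> V * y (t - 1) + Vb * (1 - y (t - 1))"
    proof (cases "a \<le> t - 1")
      case True
      have "real (min t m - a) \<le> real (min (t-1) m - a) + 1" using True by auto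
      then have "real (min t m - a) * V \<le> (real (min (t-1) m - a) + 1) * V" using V by (intro mult_right_mono) auto
      moreover have "t - 1 \<le> T" "a \<le> t" using True t by auto
      ultimately show ?thesis using True t by (simp add: x_def y_def algebra_simps)
    next
      case False
      then show ?thesis using t Cu V a by (auto simp: x_def y_def)
    qed
  qed
  have c7: "\<forall>t\<in>{2..T}. x (t - 1) - x t \<le> V * y t + Vb * (1 - y t)"
  proof
    fix t assume t: "t \<in> {2..T}"
    show "x (t - 1) - x t \<le> V * y t + Vb * (1 - y t)"
    proof (cases "a \<le> t - 1")
      case True
      have "real (min (t-1) m - a) \<le> real (min t m - a)" using True by auto
      then have "real (min (t-1) m - a) * V \<le> real (min t m - a) * V" using V by (intro mult_right_mono) auto
      moreover have "t - 1 \<le> T" "a \<le> t" using True t by auto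
      ultimately show ?thesis using True t V by (simp add: x_def y_def algebra_simps)
    next
      case False
      then show ?thesis using t Cu V a xlo[of t] by (auto simp: x_def y_def)
    qed
  qed
  show ?thesis unfolding r PSet_iff using c1 c2 c3 c4 c5 c6 c7 by blast
qed

lemma ON_in_P:
  assumes "0 < Cu" "Cu \<le> Cb" "0 \<le> V" "0 \<le> Vb" "1 \<le> T"
  shows "ONp T Cb \<in> PSet T L ell Cb Cu V Vb"
proof -
  have "ONp T Cb = IV T 1 T Cb" by (auto simp: ONp_def IV_def)
  then show ?thesis using IV_in_P[of 1 T T Cu Cb Cb Vb L V ell] assms by simp
qed

lemma OFF_in_P: "0 \<le> Vb \<Longrightarrow> OFFp \<in> PSet T L ell Cb Cu V Vb"
  by (simp add: OFFp_def PSet_iff)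


lemma PERT_in_P:
  assumes "0 \<le> Cu" "Cu \<le> Cb - V" "0 \<le> V"
  shows "PERT T Cb V j \<in> PSet T L ell Cb Cu V Vb"
proof -
  define y where "y \<tau> = (if \<tau> \<in> {1..T} then 1 else (0::real))" for \<tau>
  define x where "x \<tau> = (if \<tau> \<in> {1..T} then (if \<tau> = j then Cb - V else Cb) else (0::real))" for \<tau>
  have r: "PERT T Cb V j = (x, y)" by (simp add: PERT_def fun_eq_iff x_def y_def)
  have c1: "\<forall>t. t \<notin> {1..T} \<longrightarrow> x t = 0 \<and> y t = 0" by (simp add: x_def y_def)
  have c2: "\<forall>t\<in>{1..T}. x t \<ge> 0 \<and> (y t = 0 \<or> y t = 1)" using assms by (simp add: x_def y_def)
  have c3: "\<forall>t\<in>{2..T}. \<forall>k\<in>{t..min T (t + L - 1)}. - y (t - 1) + y t - y k \<le> 0"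
    by (auto simp: y_def)
  have c4: "\<forall>t\<in>{2..T}. \<forall>k\<in>{t..min T (t + ell - 1)}. y (t - 1) - y t + y k \<le> 1"
    by (auto simp: y_def)
  have c5: "\<forall>t\<in>{1..T}. - x t + Cu * y t \<le> 0 \<and> x t - Cb * y t \<le> 0"
    using assms by (auto simp: x_def y_def)
  have c6: "\<forall>t\<in>{2..T}. x t - x (t - 1) \<le> V * y (t - 1) + Vb * (1 - y (t - 1))"
  proof
    fix t assume t: "t \<in> {2..T}"
    then have "t - 1 \<in> {1..T}" "t \<in> {1..T}" by auto
    then show "x t - x (t - 1) \<le> V * y (t - 1) + Vb * (1 - y (t - 1))"
      using assms by (simp add: x_def y_def)
  qed
  have c7: "\<forall>t\<in>{2..T}. x (t - 1) - x t \<le> V * y t + Vb * (1 - y t)"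
  proof
    fix t assume t: "t \<in> {2..T}"
    then have "t - 1 \<in> {1..T}" "t \<in> {1..T}" by auto
    then show "x (t - 1) - x t \<le> V * y t + Vb * (1 - y t)"
      using assms by (simp add: x_def y_def)
  qed
  show ?thesis unfolding r PSet_iff using c1 c2 c3 c4 c5 c6 c7 by blast
qed

context setting begin

definition cc :: "nat \<Rightarrow> real" where "cc s = Cb - Vb - real s * V"
definition inS :: "nat \<Rightarrow> bool" where "inS s \<longleftrightarrow> s \<in> S"

lemma T_big: "smax + 3 \<le> T" using sT by linarith

lemma S_le: "s \<in> S \<Longrightarrow> s \<le> smax" using ab bs by auto

lemma sumS_IV:
  assumes a: "1 \<le> a" "a \<le> b" "b \<le> T" and t: "smax + 2 \<le> t" "t \<le> T - 1"
  shows "(\<Sum>s\<in>S. cc s * (snd (IV T a b X) (t - s) - snd (IV T a b X) (t - s - 1)))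
    = (if a \<le> t \<and> inS (t - a) then cc (t - a) else 0) - (if b + 1 \<le> t \<and> inS (t - (b + 1)) then cc (t - (b + 1)) else 0)"
proof -
  have "(\<Sum>s\<in>S. cc s * (snd (IV T a b X) (t - s) - snd (IV T a b X) (t - s - 1)))
      = (\<Sum>s\<in>S. (if s = t - a \<and> a \<le> t then cc s else 0) - (if s = t - (b + 1) \<and> b + 1 \<le> t then cc s else 0))"
  proof (rule sum.cong[OF refl])
    fix s assume "s \<in> S"
    then have s: "s \<le> smax" by (rule S_le)
    have j: "2 \<le> t - s" "t - s \<le> T" "1 \<le> t - s - 1" "t - s - 1 \<le> T" using s t by auto
    have e1: "(s = t - a \<and> a \<le> t) \<longleftrightarrow> t - s = a" using j s t by auto
    have e2: "(s = t - (b + 1) \<and> b + 1 \<le> t) \<longleftrightarrow> t - s = b + 1" using j s t by auto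
    have y1: "snd (IV T a b X) (t - s) = (if a \<le> t - s \<and> t - s \<le> b then 1 else 0)" using j by (simp add: IV_def)
    have y2: "snd (IV T a b X) (t - s - 1) = (if a \<le> t - s - 1 \<and> t - s - 1 \<le> b then 1 else 0)" using j by (simp add: IV_def)
    show "cc s * (snd (IV T a b X) (t - s) - snd (IV T a b X) (t - s - 1))
      = (if s = t - a \<and> a \<le> t then cc s else 0) - (if s = t - (b + 1) \<and> b + 1 \<le> t then cc s else 0)"
      unfolding y1 y2 e1 e2 using j a by auto
  qed
  also have "\<dots> = (\<Sum>s\<in>S. (if s = t - a \<and> a \<le> t then cc s else 0)) - (\<Sum>s\<in>S. (if s = t - (b + 1) \<and> b + 1 \<le> t then cc s else 0))"
    by (rule sum_subtractf)
  also have "(\<Sum>s\<in>S. (if s = t - a \<and> a \<le> t then cc s else 0)) = (if a \<le> t \<and> inS (t - a) then cc (t - a) else 0)"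
    by (cases "a \<le> t") (simp_all add: sum.delta inS_def)
  also have "(\<Sum>s\<in>S. (if s = t - (b + 1) \<and> b + 1 \<le> t then cc s else 0)) = (if b + 1 \<le> t \<and> inS (t - (b + 1)) then cc (t - (b + 1)) else 0)"
    by (cases "b + 1 \<le> t") (simp_all add: sum.delta inS_def)
  finally show ?thesis .
qed

lemma G1_IV:
  assumes a: "1 \<le> a" "a \<le> b" "b \<le> T" and t: "smax + 2 \<le> t" "t \<le> T - 1"
  shows "G1 t (snd (IV T a b X)) = (Cb - eta * V) * (if a \<le> t \<and> t \<le> b then 1 else 0)
     + eta * V * (if a \<le> t + 1 \<and> t + 1 \<le> b then 1 else 0)
     - ((if a \<le> t \<and> inS (t - a) then cc (t - a) else 0) - (if b + 1 \<le> t \<and> inS (t - (b + 1)) then cc (t - (b + 1)) else 0))"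
proof -
  have "G1 t (snd (IV T a b X)) = (Cb - eta * V) * snd (IV T a b X) t + eta * V * snd (IV T a b X) (t + 1)
      - (\<Sum>s\<in>S. cc s * (snd (IV T a b X) (t - s) - snd (IV T a b X) (t - s - 1)))"
    by (simp add: G1_def Glin_def cc_def)
  moreover have "snd (IV T a b X) t = (if a \<le> t \<and> t \<le> b then 1 else 0)" using t a by (auto simp: IV_def)
  moreover have "snd (IV T a b X) (t + 1) = (if a \<le> t + 1 \<and> t + 1 \<le> b then 1 else 0)" using t a T_big by (auto simp: IV_def)
  ultimately show ?thesis using sumS_IV[OF a t, of X] by simp
qed

lemma snd_ON: "snd (ONp T Cb) = snd (IV T 1 T X)"
  by (auto simp: ONp_def IV_def fun_eq_iff)
lemma snd_PERT: "snd (PERT T Cb V j) = snd (IV T 1 T X)"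
  by (auto simp: PERT_def IV_def fun_eq_iff)
lemma snd_RAMP: "1 \<le> a \<Longrightarrow> snd (RAMP T a m Vb V) = snd (IV T a T X)"
  by (auto simp: RAMP_def IV_def fun_eq_iff)


lemma D_IV:
  assumes "1 \<le> a" "a \<le> b" "b \<le> T" "m \<in> {2..T}"
  shows "snd (IV T a b X) m - snd (IV T a b X) (m - 1) = (if m = a then 1 else 0) - (if m = b + 1 then 1 else 0)"
  using assms by (auto simp: IV_def)

lemma fst_IV: "t \<in> {1..T} \<Longrightarrow> fst (IV T a b X) t = (if a \<le> t \<and> t \<le> b then X else 0)"
  by (simp add: IV_def)

definition pjf :: "nat \<Rightarrow> nat \<Rightarrow> nat" where
  "pjf t i = (if i - T < t then i - T else i - T + 1)"
definition rsp :: "nat \<Rightarrow> pt" where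
  "rsp t = (if eta = 0 then IV T (t + 1) T Vb else if eta = (Cb - Vb) / V then IV T 1 t Vb else IV T (t + 1 - L) t Vb)"
definition rpt :: "nat \<Rightarrow> nat \<Rightarrow> pt" where
  "rpt t a = (if a = t + 1 then rsp t else if t + 2 \<le> a then IV T a T Vb
     else if inS (t - a) then RAMP T a t Vb V else IV T 1 (a - 1) Vb)"
definition fam1 :: "nat \<Rightarrow> nat \<Rightarrow> pt" where
  "fam1 t i = (if i = 0 then ONp T Cb else if i = 1 then OFFp else if i \<le> T then rpt t i
     else PERT T Cb V (pjf t i))"

lemma basic: "0 \<le> Vb" "Vb \<le> Cb" "Cu \<le> Vb" "0 \<le> Cu" "0 \<le> V" "Cu \<le> Cb - V"
  using V0 Cu0 CuVb VbV by auto

abbreviation "etacond \<equiv> eta = 0 \<or> eta = (Cb - Vb) / V \<or> (eta = real L - 1 \<and> L - 1 \<in> S)"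

lemma rsp_facts:
  assumes t: "smax + 2 \<le> t" "t \<le> T - 1" and ec: etacond
  shows "rsp t \<in> P \<and> fst (rsp t) t = G1 t (snd (rsp t))
    \<and> snd (rsp t) (t + 1) - snd (rsp t) (t + 1 - 1) \<noteq> 0"
proof -
  have T4: "smax + 3 \<le> T" by (rule T_big)
  have tT: "t \<in> {1..T}" "t + 1 \<in> {2..T}" using t T4 by auto
  have t1S: "\<not> inS (t - 1)" using t S_le unfolding inS_def by fastforce
  note bs = basic
  show ?thesis
  proof (cases "eta = 0")
    case True
    have r: "rsp t = IV T (t + 1) T Vb" unfolding rsp_def using True by simp
    have P: "IV T (t + 1) T Vb \<in> P" by (rule IV_in_P) (use t T4 bs in auto)
    have F: "fst (IV T (t + 1) T Vb) t = G1 t (snd (IV T (t + 1) T Vb))"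
      using G1_IV[of "t+1" T t Vb] t T4 True by (simp add: fst_IV[OF tT(1)])
    have D: "snd (IV T (t + 1) T Vb) (t + 1) - snd (IV T (t + 1) T Vb) (t + 1 - 1) \<noteq> 0"
      using D_IV[of "t+1" T "t+1" Vb] tT by simp
    show ?thesis unfolding r using P F D by blast
  next
    case False
    note f0 = False
    show ?thesis
    proof (cases "eta = (Cb - Vb) / V")
      case True
      have r: "rsp t = IV T 1 t Vb" unfolding rsp_def using True f0 by simp
      have eV: "eta * V = Cb - Vb" using True V0 by simp
      have P: "IV T 1 t Vb \<in> P" by (rule IV_in_P) (use t T4 bs in auto)
      have g: "G1 t (snd (IV T 1 t Vb)) = Cb - eta * V"
        using G1_IV[of 1 t t Vb] t T4 t1S by simp
      have F: "fst (IV T 1 t Vb) t = G1 t (snd (IV T 1 t Vb))"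
        unfolding g using tT(1) eV by (simp add: fst_IV)
      have D: "snd (IV T 1 t Vb) (t + 1) - snd (IV T 1 t Vb) (t + 1 - 1) \<noteq> 0"
        using D_IV[of 1 t "t+1" Vb] tT by simp
      show ?thesis unfolding r using P F D by blast
    next
      case False
      then have eL: "eta = real L - 1" "L - 1 \<in> S" using ec f0 by auto
      have r: "rsp t = IV T (t + 1 - L) t Vb" unfolding rsp_def using False f0 by simp
      have L1: "L - 1 \<le> smax" using eL(2) S_le by blast
      have a1: "2 \<le> t + 1 - L" "t + 1 - L \<le> t" "t - (t + 1 - L) = L - 1" using L1 t L0 by auto
      have iL: "inS (L - 1)" using eL by (simp add: inS_def)
      have P: "IV T (t + 1 - L) t Vb \<in> P" by (rule IV_in_P) (use t T4 bs a1 in auto)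
      have cc: "cc (L - 1) = Cb - Vb - eta * V" using eL L0 by (simp add: cc_def of_nat_diff)
      have g: "G1 t (snd (IV T (t + 1 - L) t Vb)) = Cb - eta * V - cc (L - 1)"
        using G1_IV[of "t + 1 - L" t t Vb] t T4 a1 iL by simp
      have F: "fst (IV T (t + 1 - L) t Vb) t = G1 t (snd (IV T (t + 1 - L) t Vb))"
        unfolding g cc using tT(1) a1 by (simp add: fst_IV)
      have D: "snd (IV T (t + 1 - L) t Vb) (t + 1) - snd (IV T (t + 1 - L) t Vb) (t + 1 - 1) \<noteq> 0"
        using D_IV[of "t + 1 - L" t "t+1" Vb] tT a1 L0 by simp
      show ?thesis unfolding r using P F D by blast
    qed
  qed
qed


lemma rpt_facts:
  assumes t: "smax + 2 \<le> t" "t \<le> T - 1" and a: "a \<in> {2..T}" "a \<noteq> t + 1"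
  shows "rpt t a \<in> P \<and> fst (rpt t a) t = G1 t (snd (rpt t a))
    \<and> snd (rpt t a) a - snd (rpt t a) (a - 1) \<noteq> 0
    \<and> (\<forall>m\<in>{2..T}. m \<noteq> a \<longrightarrow> snd (rpt t a) m - snd (rpt t a) (m - 1) = 0)"
proof -
  have T4: "smax + 3 \<le> T" by (rule T_big)
  have tT: "t \<in> {1..T}" using t T4 by auto
  have tt: "t < T" "t + 1 \<le> T" "\<not> T + 1 \<le> t" using t T4 by auto
  have t1S: "\<not> inS (t - 1)" using t S_le unfolding inS_def by fastforce
  note bs = basic
  consider (d) "t + 2 \<le> a" | (e) "a \<le> t" "inS (t - a)" | (f) "a \<le> t" "\<not> inS (t - a)" using a by linarith
  then show ?thesis
  proof cases
    case d
    have r: "rpt t a = IV T a T Vb" using d a by (simp add: rpt_def)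
    have P: "IV T a T Vb \<in> P" by (rule IV_in_P) (use a bs in auto)
    have F: "fst (IV T a T Vb) t = G1 t (snd (IV T a T Vb))"
      using G1_IV[of a T t Vb] t a d tt by (simp add: fst_IV[OF tT])
    have D: "snd (IV T a T Vb) a - snd (IV T a T Vb) (a - 1) \<noteq> 0"
      using D_IV[of a T a Vb] a by simp
    have D2: "\<forall>m\<in>{2..T}. m \<noteq> a \<longrightarrow> snd (IV T a T Vb) m - snd (IV T a T Vb) (m - 1) = 0"
      using D_IV[of a T _ Vb] a by simp
    show ?thesis unfolding r using P F D D2 by blast
  next
    case e
    have r: "rpt t a = RAMP T a t Vb V" using e a by (simp add: rpt_def)
    have ta: "t - a \<le> smax" using e(2) S_le unfolding inS_def by blast
    have top: "Vb + real (t - a) * V \<le> Cb"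
    proof -
      have "real (t - a) * V \<le> real smax * V" using ta V0 by (intro mult_right_mono) auto
      then show ?thesis using smaxq by simp
    qed
    have P: "RAMP T a t Vb V \<in> P" by (rule RAMP_in_P) (use a e t top bs in auto)
    have s: "snd (RAMP T a t Vb V) = snd (IV T a T Vb)" using a by (intro snd_RAMP) auto
    have f: "fst (RAMP T a t Vb V) t = Vb + real (t - a) * V" using e t T4 by (simp add: RAMP_def)
    have g: "G1 t (snd (IV T a T Vb)) = Cb - cc (t - a)"
      using G1_IV[of a T t Vb] t a e T4 tt by simp
    have F: "fst (RAMP T a t Vb V) t = G1 t (snd (RAMP T a t Vb V))"
      unfolding s g f by (simp add: cc_def)
    have D: "snd (IV T a T Vb) a - snd (IV T a T Vb) (a - 1) \<noteq> 0"
      using D_IV[of a T a Vb] a by simp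
    have D2: "\<forall>m\<in>{2..T}. m \<noteq> a \<longrightarrow> snd (IV T a T Vb) m - snd (IV T a T Vb) (m - 1) = 0"
      using D_IV[of a T _ Vb] a by simp
    show ?thesis unfolding r s using P F D D2 unfolding s by blast
  next
    case f
    have r: "rpt t a = IV T 1 (a - 1) Vb" using f a by (simp add: rpt_def)
    have P: "IV T 1 (a - 1) Vb \<in> P" by (rule IV_in_P) (use a bs in auto)
    have F: "fst (IV T 1 (a - 1) Vb) t = G1 t (snd (IV T 1 (a - 1) Vb))"
      using G1_IV[of 1 "a - 1" t Vb] t a f t1S tt by (simp add: fst_IV[OF tT])
    have D: "snd (IV T 1 (a - 1) Vb) a - snd (IV T 1 (a - 1) Vb) (a - 1) \<noteq> 0"
    proof -
      have "1 \<le> a - 1" "a - 1 \<le> T" using a by auto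
      then show ?thesis using D_IV[of 1 "a - 1" a Vb] a by simp
    qed
    have D2: "\<forall>m\<in>{2..T}. m \<noteq> a \<longrightarrow> snd (IV T 1 (a - 1) Vb) m - snd (IV T 1 (a - 1) Vb) (m - 1) = 0"
    proof (intro ballI impI)
      fix m assume m: "m \<in> {2..T}" "m \<noteq> a"
      have "1 \<le> a - 1" "a - 1 \<le> T" using a by auto
      then show "snd (IV T 1 (a - 1) Vb) m - snd (IV T 1 (a - 1) Vb) (m - 1) = 0"
        using D_IV[of 1 "a - 1" m Vb] m by simp
    qed
    show ?thesis unfolding r using P F D D2 by blast
  qed
qed


lemma G1_ON: assumes t: "smax + 2 \<le> t" "t \<le> T - 1" shows "G1 t (snd (IV T 1 T X)) = Cb"
proof -
  have T4: "smax + 3 \<le> T" by (rule T_big)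
  have tt: "t < T" "t + 1 \<le> T" "\<not> T + 1 \<le> t" "1 \<le> t" using t T4 by auto
  have t1S: "\<not> inS (t - 1)" using t S_le unfolding inS_def by fastforce
  show ?thesis using G1_IV[of 1 T t X] t tt t1S by simp
qed

lemma fam1_facts:
  assumes t: "smax + 2 \<le> t" "t \<le> T - 1" and ec: etacond
  shows "aff_indep (2 * T - 1) (fam1 t)"
    and "\<forall>i\<le>2 * T - 1. fam1 t i \<in> P \<and> fst (fam1 t i) t = G1 t (snd (fam1 t i))"
proof -
  have T4: "smax + 3 \<le> T" by (rule T_big)
  have tT: "t \<in> {1..T}" using t T4 by auto
  note bs = basic
  have pjr: "pjf t i \<in> {1..T}" "pjf t i \<noteq> t" if "i \<in> {T+1..2*T-1}" for i
    using that t by (auto simp: pjf_def)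
  have pjinj: "inj_on (pjf t) {T+1..2*T-1}"
  proof (rule inj_onI)
    fix i i' assume i: "i \<in> {T+1..2*T-1}" "i' \<in> {T+1..2*T-1}" "pjf t i = pjf t i'"
    then show "i = i'" by (auto simp: pjf_def split: if_splits)
  qed
  have fr: "fam1 t a = rpt t a" if "a \<in> {2..T}" for a using that by (simp add: fam1_def)
  have fp: "fam1 t i = PERT T Cb V (pjf t i)" if "i \<in> {T+1..2*T-1}" for i using that T4 by (simp add: fam1_def)
  have st: "t + 1 \<in> {2..T}" using t T4 by auto
  have rt: "rpt t (t + 1) = rsp t" by (simp add: rpt_def)
  show "aff_indep (2 * T - 1) (fam1 t)"
  proof (rule fam_indep[where pj = "pjf t" and astar = "t + 1" and V = V and Cb = Cb])
    show "2 \<le> T" "T \<le> 2 * T - 1" using T4 by auto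
    show "V \<noteq> 0" using V0 by simp
    show "fam1 t 0 = ONp T Cb" "fam1 t 1 = OFFp" by (simp_all add: fam1_def)
    show "\<forall>i\<in>{T + 1..2 * T - 1}. fam1 t i = PERT T Cb V (pjf t i)" using fp by blast
    show "inj_on (pjf t) {T + 1..2 * T - 1}" by (rule pjinj)
    show "pjf t ` {T + 1..2 * T - 1} \<subseteq> {1..T}" using pjr by blast
    show "\<forall>a\<in>{2..T}. snd (fam1 t a) a - snd (fam1 t a) (a - 1) \<noteq> 0"
    proof
      fix a assume a: "a \<in> {2..T}"
      show "snd (fam1 t a) a - snd (fam1 t a) (a - 1) \<noteq> 0"
      proof (cases "a = t + 1")
        case True then show ?thesis using rsp_facts[OF t ec] fr[OF a] rt by simp
      next
        case False then show ?thesis using rpt_facts[OF t a False] fr[OF a] by simp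
      qed
    qed
    show "\<forall>a\<in>{2..T}. a \<noteq> t + 1 \<longrightarrow> (\<forall>m\<in>{2..T}. m \<noteq> a \<longrightarrow> snd (fam1 t a) m - snd (fam1 t a) (m - 1) = 0)"
      using rpt_facts[OF t] fr by simp
  qed
  show "\<forall>i\<le>2 * T - 1. fam1 t i \<in> P \<and> fst (fam1 t i) t = G1 t (snd (fam1 t i))"
  proof (intro allI impI)
    fix i assume i: "i \<le> 2 * T - 1"
    consider "i = 0" | "i = 1" | "i \<in> {2..T}" | "i \<in> {T+1..2*T-1}" using i by fastforce
    then show "fam1 t i \<in> P \<and> fst (fam1 t i) t = G1 t (snd (fam1 t i))"
    proof cases
      case 1
      have "ONp T Cb \<in> P" by (rule ON_in_P) (use bs CbCu Cu0 T4 in auto)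
      moreover have "fst (ONp T Cb) t = Cb" using tT by (simp add: ONp_def)
      ultimately show ?thesis using 1 G1_ON[OF t, of Cb] by (simp add: fam1_def snd_ON[where X=Cb])
    next
      case 2
      have "OFFp \<in> P" by (rule OFF_in_P) (use bs in auto)
      moreover have "G1 t (snd OFFp) = 0" by (simp add: G1_def Glin_def OFFp_def)
      ultimately show ?thesis using 2 by (simp add: fam1_def OFFp_def)
    next
      case 3
      show ?thesis
      proof (cases "i = t + 1")
        case True then show ?thesis using rsp_facts[OF t ec] fr[OF 3] rt by simp
      next
        case False then show ?thesis using rpt_facts[OF t 3 False] fr[OF 3] by simp
      qed
    next
      case 4
      have "PERT T Cb V (pjf t i) \<in> P" by (rule PERT_in_P) (use bs in auto)
      moreover have "fst (PERT T Cb V (pjf t i)) t = Cb" using tT pjr[OF 4] by (simp add: PERT_def)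
      ultimately show ?thesis using fp[OF 4] G1_ON[OF t, of Cb] by (simp add: snd_PERT[where X=Cb])
    qed
  qed
qed

end

lemma P_supp: "p \<in> PSet T L ell Cb Cu V Vb \<Longrightarrow> \<forall>\<tau>. \<tau> \<notin> {1..T} \<longrightarrow> fst p \<tau> = 0 \<and> snd p \<tau> = 0"
  by (cases p) (simp add: PSet_iff)

lemma conv_supp:
  assumes "\<forall>p\<in>X. \<forall>\<tau>. \<tau> \<notin> {1..T} \<longrightarrow> fst p \<tau> = 0 \<and> snd p \<tau> = 0" and "p \<in> conv_hull X"
  shows "\<forall>\<tau>. \<tau> \<notin> {1..T} \<longrightarrow> fst p \<tau> = 0 \<and> snd p \<tau> = 0"
proof -
  from assms(2) obtain k :: nat and c q where kcq0: "(\<forall>i<k. c i \<ge> 0 \<and> q i \<in> X) \<and> (\<Sum>i<k. c i) = 1 \<and>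
    p = ((\<lambda>t. \<Sum>i<k. c i * fst (q i) t), (\<lambda>t. \<Sum>i<k. c i * snd (q i) t))"
    unfolding conv_hull_def mem_Collect_eq by (elim exE) (erule that)
  then show ?thesis using assms(1) by auto
qed

lemma rev_rev:
  assumes "\<forall>\<tau>. \<tau> \<notin> {1..T} \<longrightarrow> fst p \<tau> = 0 \<and> snd p \<tau> = 0"
  shows "rev_pt T (rev_pt T p) = p"
proof -
  have "fst (rev_pt T (rev_pt T p)) = fst p" "snd (rev_pt T (rev_pt T p)) = snd p"
    using assms by (auto simp: rev_pt_def fun_eq_iff)
  then show ?thesis by (simp add: prod_eq_iff)
qed

lemma aff_indep_rev:
  assumes ai: "aff_indep k q" and supp: "\<forall>i\<le>k. \<forall>\<tau>. \<tau> \<notin> {1..T} \<longrightarrow> fst (q i) \<tau> = 0 \<and> snd (q i) \<tau> = 0"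
  shows "aff_indep k (\<lambda>i. rev_pt T (q i))"
  unfolding aff_indep_def
proof (rule allI, rule impI)
  fix c :: "nat \<Rightarrow> real"
  assume h: "(\<Sum>i\<le>k. c i) = 0 \<and> (\<forall>t. (\<Sum>i\<le>k. c i * fst (rev_pt T (q i)) t) = 0 \<and> (\<Sum>i\<le>k. c i * snd (rev_pt T (q i)) t) = 0)"
  have "\<forall>t. (\<Sum>i\<le>k. c i * fst (q i) t) = 0 \<and> (\<Sum>i\<le>k. c i * snd (q i) t) = 0"
  proof
    fix t
    show "(\<Sum>i\<le>k. c i * fst (q i) t) = 0 \<and> (\<Sum>i\<le>k. c i * snd (q i) t) = 0"
    proof (cases "t \<in> {1..T}")
      case True
      then have t': "T + 1 - t \<in> {1..T}" "T + 1 - (T + 1 - t) = t" by auto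
      have "(\<Sum>i\<le>k. c i * fst (rev_pt T (q i)) (T + 1 - t)) = 0" "(\<Sum>i\<le>k. c i * snd (rev_pt T (q i)) (T + 1 - t)) = 0"
        using h by blast+
      then show ?thesis using t' by (simp add: rev_pt_def)
    next
      case False
      then show ?thesis using supp by simp
    qed
  qed
  then show "\<forall>i\<le>k. c i = 0" using ai h unfolding aff_indep_def by blast
qed

lemma pdim_eq:
  assumes ex: "\<exists>q. (\<forall>i\<le>m. q i \<in> X) \<and> aff_indep m q"
    and bd: "\<And>k q. (\<forall>i\<le>k. q i \<in> X) \<Longrightarrow> aff_indep k q \<Longrightarrow> k \<le> m"
  shows "pdim X = int m"
proof -
  have ne: "X \<noteq> {}" using ex by blast
  have "(GREATEST k. \<exists>q. (\<forall>i\<le>k. q i \<in> X) \<and> aff_indep k q) = m"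
    by (rule Greatest_equality) (use ex bd in blast)+
  then show ?thesis using ne by (simp add: pdim_def)
qed

context setting begin

definition famQ :: "nat \<Rightarrow> pt" where
  "famQ i = (if i = 0 then ONp T Cb else if i = 1 then OFFp else if i \<le> T then IV T i T Vb
     else PERT T Cb V (i - T))"

lemma famQ_facts: "aff_indep (2 * T) famQ" "\<forall>i\<le>2 * T. famQ i \<in> P"
proof -
  have T4: "smax + 3 \<le> T" by (rule T_big)
  note bs = basic
  have fr: "famQ a = IV T a T Vb" if "a \<in> {2..T}" for a using that by (simp add: famQ_def)
  have fp: "famQ i = PERT T Cb V (i - T)" if "i \<in> {T+1..2*T}" for i using that T4 by (simp add: famQ_def)
  show "aff_indep (2 * T) famQ"
  proof (rule fam_indep[where pj = "\<lambda>i. i - T" and astar = 0 and V = V and Cb = Cb])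
    show "2 \<le> T" "T \<le> 2 * T" using T4 by auto
    show "V \<noteq> 0" using V0 by simp
    show "famQ 0 = ONp T Cb" "famQ 1 = OFFp" by (simp_all add: famQ_def)
    show "\<forall>i\<in>{T + 1..2 * T}. famQ i = PERT T Cb V (i - T)" using fp by blast
    show "inj_on (\<lambda>i. i - T) {T + 1..2 * T}" by (rule inj_onI) auto
    show "(\<lambda>i. i - T) ` {T + 1..2 * T} \<subseteq> {1..T}" by auto
    show "\<forall>a\<in>{2..T}. snd (famQ a) a - snd (famQ a) (a - 1) \<noteq> 0"
      using D_IV[of _ T _ Vb] fr by simp
    show "\<forall>a\<in>{2..T}. a \<noteq> 0 \<longrightarrow> (\<forall>m\<in>{2..T}. m \<noteq> a \<longrightarrow> snd (famQ a) m - snd (famQ a) (m - 1) = 0)"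
      using D_IV[of _ T _ Vb] fr by simp
  qed
  show "\<forall>i\<le>2 * T. famQ i \<in> P"
  proof (intro allI impI)
    fix i assume i: "i \<le> 2 * T"
    consider "i = 0" | "i = 1" | "i \<in> {2..T}" | "i \<in> {T+1..2*T}" using i by fastforce
    then show "famQ i \<in> P"
    proof cases
      case 1 then show ?thesis using ON_in_P[of Cu Cb V Vb T L ell] bs CbCu Cu0 T4 by (simp add: famQ_def)
    next
      case 2 then show ?thesis using OFF_in_P[of Vb T L ell Cb Cu V] bs by (simp add: famQ_def)
    next
      case 3
      have "IV T i T Vb \<in> P" by (rule IV_in_P) (use 3 bs in auto)
      then show ?thesis using fr[OF 3] by simp
    next
      case 4
      have "PERT T Cb V (i - T) \<in> P" by (rule PERT_in_P) (use bs in auto)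
      then show ?thesis using fp[OF 4] by simp
    qed
  qed
qed

end

theorem proposition4:
  fixes T L ell :: nat and Cb Cu V Vb eta :: real and alpha beta smax :: nat
  assumes "T > 0" and "L > 0" and "ell > 0"
    and "Cb > Cu" and "Cu > 0" and "V > 0" and "Vb + V \<le> Cb"
    and "Cu < Vb" and "Vb < Cu + V"
    and "0 \<le> eta" and "eta \<le> min (real L - 1) ((Cb - Vb) / V)"
    and "L \<le> smax" and "int smax \<le> int T - 3" and "int smax \<le> \<lfloor>(Cb - Vb) / V\<rfloor>"
    and "alpha < beta" and "beta \<le> smax"
    and "beta = alpha + 1 \<or> smax \<le> L + alpha"
  defines "Q \<equiv> conv_hull (PSet T L ell Cb Cu V Vb)"
    and "rhs1 \<equiv> \<lambda>t (p :: pt). (Cb - eta * V) * snd p t + eta * V * snd p (t + 1)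
            - (\<Sum>s\<in>{0..alpha} \<union> {beta..smax}. (Cb - Vb - real s * V) * (snd p (t - s) - snd p (t - s - 1)))"
    and "rhs2 \<equiv> \<lambda>t (p :: pt). (Cb - eta * V) * snd p t + eta * V * snd p (t - 1)
            - (\<Sum>s\<in>{0..alpha} \<union> {beta..smax}. (Cb - Vb - real s * V) * (snd p (t + s) - snd p (t + s + 1)))"
  shows "(\<forall>t. smax + 2 \<le> t \<and> t \<le> T - 1 \<longrightarrow> valid_ineq Q (\<lambda>p. fst p t) (rhs1 t))
       \<and> (\<forall>t. 2 \<le> t \<and> int t \<le> int T - int smax - 1 \<longrightarrow> valid_ineq Q (\<lambda>p. fst p t) (rhs2 t))
       \<and> ((eta = 0 \<or> eta = (Cb - Vb) / V \<or> (eta = real L - 1 \<and> L - 1 \<in> {0..alpha} \<union> {beta..smax})) \<longrightarrow>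
            (\<forall>t. smax + 2 \<le> t \<and> t \<le> T - 1 \<longrightarrow> facet_ineq Q (\<lambda>p. fst p t) (rhs1 t))
          \<and> (\<forall>t. 2 \<le> t \<and> int t \<le> int T - int smax - 1 \<longrightarrow> facet_ineq Q (\<lambda>p. fst p t) (rhs2 t)))"
proof -
  interpret setting T L ell Cb Cu V Vb eta alpha beta smax
    by unfold_locales (use assms(1-17) in auto)
  have r1: "rhs1 t p = G1 t (snd p)" for t p by (simp add: rhs1_def G1_def Glin_def)
  have r2: "rhs2 t p = G2 t (snd p)" for t p by (simp add: rhs2_def G2_def Glin_def)
  have T4: "smax + 3 \<le> T" by (rule T_big)
  have suppP: "\<forall>p\<in>P. \<forall>\<tau>. \<tau> \<notin> {1..T} \<longrightarrow> fst p \<tau> = 0 \<and> snd p \<tau> = 0" using P_supp by blast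
  have suppQ: "\<forall>\<tau>. \<tau> \<notin> {1..T} \<longrightarrow> fst p \<tau> = 0 \<and> snd p \<tau> = 0" if "p \<in> Q" for p
    using conv_supp[OF suppP] that unfolding Q_def by blast
  have PQ: "p \<in> Q" if "p \<in> P" for p using in_conv[OF that] unfolding Q_def .
  have V1: "valid_ineq Q (\<lambda>p. fst p t) (rhs1 t)" if t: "smax + 2 \<le> t" "t \<le> T - 1" for t
    unfolding valid_ineq_def r1 Q_def using valid1_Q[OF _ t] by blast
  have V2: "valid_ineq Q (\<lambda>p. fst p t) (rhs2 t)" if t: "2 \<le> t" "int t \<le> int T - int smax - 1" for t
    unfolding valid_ineq_def r2 Q_def using valid2_Q[OF _ t] by blast
  have pQ: "pdim Q = int (2 * T)"
  proof (rule pdim_eq)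
    show "\<exists>q. (\<forall>i\<le>2 * T. q i \<in> Q) \<and> aff_indep (2 * T) q"
      using famQ_facts PQ by blast
    fix k q assume "\<forall>i\<le>k. q i \<in> Q" "aff_indep k q"
    then show "k \<le> 2 * T" using aff_bound[of k q T] suppQ by blast
  qed
  have F1: "facet_ineq Q (\<lambda>p. fst p t) (rhs1 t)" if t: "smax + 2 \<le> t" "t \<le> T - 1" and ec: etacond for t
  proof -
    have tT: "t \<in> {1..T}" using t T4 by auto
    have "pdim {p \<in> Q. fst p t = rhs1 t p} = int (2 * T - 1)"
    proof (rule pdim_eq)
      show "\<exists>q. (\<forall>i\<le>2 * T - 1. q i \<in> {p \<in> Q. fst p t = rhs1 t p}) \<and> aff_indep (2 * T - 1) q"
        using fam1_facts[OF t ec] PQ r1 by (intro exI[of _ "fam1 t"]) auto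
      fix k q assume h: "\<forall>i\<le>k. q i \<in> {p \<in> Q. fst p t = rhs1 t p}" "aff_indep k q"
      show "k \<le> 2 * T - 1"
      proof (rule aff_bound_face[OF h(2) _ tT])
        show "\<forall>i\<le>k. \<forall>\<tau>. \<tau> \<notin> {1..T} \<longrightarrow> fst (q i) \<tau> = 0 \<and> snd (q i) \<tau> = 0" using h(1) suppQ by blast
        show "\<forall>i\<le>k. fst (q i) t = Glin (Cb - eta * V) (eta * V) t (t+1) S (\<lambda>s. Cb - Vb - real s * V) (\<lambda>s. t - s) (\<lambda>s. t - s - 1) (snd (q i))"
          using h(1) r1 unfolding G1_def by auto
      qed
    qed
    then show ?thesis unfolding facet_ineq_def pQ using V1[OF t] T4 by simp
  qed
  have F2: "facet_ineq Q (\<lambda>p. fst p t) (rhs2 t)" if t: "2 \<le> t" "int t \<le> int T - int smax - 1" and ec: etacond for t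
  proof -
    have tT: "t \<in> {1..T}" using t T4 by auto
    have t'': "smax + 2 \<le> T + 1 - t" "T + 1 - t \<le> T - 1" "t + smax + 1 \<le> T"
      using t by linarith+
    then have t': "smax + 2 \<le> T + 1 - t" "T + 1 - t \<le> T - 1" "t + smax + 1 \<le> T" "T + 1 - t \<in> {1..T}" "T + 1 - (T + 1 - t) = t"
      by auto
    define q where "q i = rev_pt T (fam1 (T + 1 - t) i)" for i
    note ff = fam1_facts[OF t'(1,2) ec]
    have qP: "q i \<in> P" if "i \<le> 2 * T - 1" for i using ff(2) that rev_in_P by (simp add: q_def)
    have qF: "fst (q i) t = rhs2 t (q i)" if i: "i \<le> 2 * T - 1" for i
    proof -
      let ?p = "fam1 (T + 1 - t) i"
      have pP: "?p \<in> P" using ff(2) i by blast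
      have "fst (q i) t = fst ?p (T + 1 - t)" unfolding q_def using tT by (simp add: rev_fst)
      also have "\<dots> = G1 (T + 1 - t) (snd ?p)" using ff(2) i by blast
      also have "\<dots> = G1 (T + 1 - t) (snd (rev_pt T (rev_pt T ?p)))" using rev_rev[of T ?p] suppP pP by simp
      also have "\<dots> = G2 t (snd (q i))" unfolding q_def by (rule G1_rev[OF t(1) t'(3)])
      finally show ?thesis by (simp add: r2)
    qed
    have qai: "aff_indep (2 * T - 1) q"
      unfolding q_def by (rule aff_indep_rev[OF ff(1)]) (use ff(2) suppP in blast)
    have "pdim {p \<in> Q. fst p t = rhs2 t p} = int (2 * T - 1)"
    proof (rule pdim_eq)
      show "\<exists>q. (\<forall>i\<le>2 * T - 1. q i \<in> {p \<in> Q. fst p t = rhs2 t p}) \<and> aff_indep (2 * T - 1) q"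
        using qP qF qai PQ by (intro exI[of _ q]) auto
      fix k q assume h: "\<forall>i\<le>k. q i \<in> {p \<in> Q. fst p t = rhs2 t p}" "aff_indep k q"
      show "k \<le> 2 * T - 1"
      proof (rule aff_bound_face[OF h(2) _ tT])
        show "\<forall>i\<le>k. \<forall>\<tau>. \<tau> \<notin> {1..T} \<longrightarrow> fst (q i) \<tau> = 0 \<and> snd (q i) \<tau> = 0" using h(1) suppQ by blast
        show "\<forall>i\<le>k. fst (q i) t = Glin (Cb - eta * V) (eta * V) t (t-1) S (\<lambda>s. Cb - Vb - real s * V) (\<lambda>s. t + s) (\<lambda>s. t + s + 1) (snd (q i))"
          using h(1) r2 unfolding G2_def by auto
      qed
    qed
    then show ?thesis unfolding facet_ineq_def pQ using V2[OF t] T4 by simp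
  qed
  show ?thesis using V1 V2 F1 F2 by blast
qed

end
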